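(* Let $X$ be a set and $F,F'$ forests of planar binary trees with leaves decorated by $X$, with $F'=T_1\cdots T_k$, $k\ge1$. Then in $T(\mathrm{Mag}(X))$: $F*F'=\sum_{\sigma\in S_k}(-1)^{O(\sigma)+k}\,F\curvearrowleft\Psi_{F'}(\sigma)$, where $O(\sigma)$ is the number of orbits of $\sigma$ on $\{1,\dots,k\}$.
   Context: Trees/forests: $\mathrm{Mag}(X)$ is identified with the span of planar rooted binary trees with leaves decorated by $X$, magmatic product $T_1*T_2=T_1\vee T_2$ (graft $T_1,T_2$ as left and right subtrees of a new root); $T(\mathrm{Mag}(X))$ has basis the forests, product concatenation, trees primitive, and $*$ extended as the unique bilinear map with, for all $f,g,h$ and trees $y$: $\varepsilon(f*g)=\varepsilon(f)\varepsilon(g)$; $\Delta(f*g)=\Delta(f)*\Delta(g)$; $f*1=f$; $1*f=\varepsilon(f)1$; $f*(gy)=(f*g)*y-f*(g*y)$; $(fg)*h=(f*h^{(1)})(g*h^{(2)})$; $(f*g)*h=f*\big((g*h^{(1)})h^{(2)}\big)$. For forests $F=F_1\cdots F_p$, $S=S_1\cdots S_n$: $F\curvearrowleft S_1=\sum_iF_1\cdots(F_i\vee S_1)\cdots F_p$ and $F\curvearrowleft S=(F\curvearrowleft S_1\cdots S_{n-1})*S_n$. Labelled skeleton: for a word $w$ of distinct positive integers define a planar binary tree with internal nodes labelled by the letters of $w$ recursively: the empty word gives the single leaf $|$, and if $w=w'\,m\,w''$ with $m=\min(w)$, the tree is the one with root labelled $m$, left subtree that of $w'$ and right subtree that of $w''$.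 $\Psi_{F'}(\sigma)$: let $O_1,\dots,O_r$ be the orbits of $\sigma$ ordered by increasing minimum. For an orbit $O=\{o\}$ of size one, the associated tree is $T_o$. For an orbit $O$ of size $m\ge2$ with minimum $o$, let $c_1=o$, $c_{j+1}=\sigma(c_j)$, $\tau=c_2c_3\cdots c_m$, and take the labelled skeleton of $\tau$ (which has $m$ leaves); graft $T_o$ on its leftmost leaf and, for each internal node labelled $c$, graft $T_c$ on the leftmost leaf of the right subtree of that node. $\Psi_{F'}(\sigma)$ is the forest of the $r$ trees so obtained, in the order of $O_1,\dots,O_r$. *)

theory Defs
  imports "HOL-Library.Poly_Mapping" "HOL-Combinatorics.Orbits" "HOL-Combinatorics.Permutations"
begin

datatype 'x tree = Leaf 'x | Node "'x tree" "'x tree"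

text \<open>Magmatic product (grafting): T1 \<or> T2 = Node T1 T2.\<close>

type_synonym 'x forest = "'x tree list"

text \<open>T(Mag(X)): integer linear combinations of forests; product = concatenation,
  unit = the empty forest.\<close>
type_synonym 'x tmag = "'x forest \<Rightarrow>\<^sub>0 int"
type_synonym 'x tmag2 = "('x forest \<times> 'x forest) \<Rightarrow>\<^sub>0 int"

definition cmul :: "'x tmag \<Rightarrow> 'x tmag \<Rightarrow> 'x tmag" where
  "cmul a b = frag_extend (\<lambda>u. frag_extend (\<lambda>v. frag_of (u @ v)) b) a"

definition tens :: "'x tmag \<Rightarrow> 'x tmag \<Rightarrow> 'x tmag2" where
  "tens a b = frag_extend (\<lambda>u. frag_extend (\<lambda>v. frag_of (u, v)) b) a"

definition counit :: "'x forest \<Rightarrow> int" where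
  "counit w = (if w = [] then 1 else 0)"

text \<open>Deshuffle coproduct (trees primitive), on basis forests.\<close>
definition coprod :: "'x forest \<Rightarrow> 'x tmag2" where
  "coprod w = (\<Sum>S\<in>Pow {0..<length w}. frag_of (nths w S, nths w (- S)))"

definition bilin :: "('x forest \<Rightarrow> 'x forest \<Rightarrow> 'x tmag) \<Rightarrow> 'x tmag \<Rightarrow> 'x tmag \<Rightarrow> 'x tmag" where
  "bilin P a b = frag_extend (\<lambda>u. frag_extend (\<lambda>v. P u v) b) a"

definition bilin2 :: "('x forest \<Rightarrow> 'x forest \<Rightarrow> 'x tmag) \<Rightarrow> 'x tmag2 \<Rightarrow> 'x tmag2 \<Rightarrow> 'x tmag2" where
  "bilin2 P a b = frag_extend (\<lambda>(u1,u2). frag_extend (\<lambda>(v1,v2). tens (P u1 v1) (P u2 v2)) b) a"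

definition counit_lin :: "'x tmag \<Rightarrow> int" where
  "counit_lin a = Poly_Mapping.lookup a []"

text \<open>The defining properties of the product * on T(Mag(X)), stated on basis forests
  (all properties are multilinear, so this is equivalent to stating them for all
  elements).  Sweedler sums are written out
  via the coproduct.\<close>
definition is_mag_star :: "('x forest \<Rightarrow> 'x forest \<Rightarrow> 'x tmag) \<Rightarrow> bool" where
  "is_mag_star P \<longleftrightarrow>
     (\<forall>t1 t2. P [t1] [t2] = frag_of [Node t1 t2]) \<and>
     (\<forall>f g. counit_lin (P f g) = counit f * counit g) \<and>
     (\<forall>f g. frag_extend coprod (P f g) = bilin2 P (coprod f) (coprod g)) \<and>
     (\<forall>f. P f [] = frag_of f) \<and>
     (\<forall>f. P [] f = frag_cmul (counit f) (frag_of [])) \<and>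
     (\<forall>f g y. P f (g @ [y]) =
         bilin P (P f g) (frag_of [y]) - bilin P (frag_of f) (P g [y])) \<and>
     (\<forall>f g h. P (f @ g) h =
         frag_extend (\<lambda>(h1, h2). cmul (P f h1) (P g h2)) (coprod h)) \<and>
     (\<forall>f g h. bilin P (P f g) (frag_of h) =
         frag_extend (\<lambda>(h1, h2). bilin P (frag_of f) (cmul (P g h1) (frag_of h2))) (coprod h))"

definition magstar :: "'x forest \<Rightarrow> 'x forest \<Rightarrow> 'x tmag" where
  "magstar = (THE P. is_mag_star P)"

definition star :: "'x tmag \<Rightarrow> 'x tmag \<Rightarrow> 'x tmag" where
  "star = bilin magstar"

definition graft1 :: "'x forest \<Rightarrow> 'x tree \<Rightarrow> 'x tmag" where
  "graft1 F s = (\<Sum>i<length F. frag_of (F[i := Node (F ! i) s]))"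

text \<open>graftR F rs computes F \<curvearrowleft> (rev rs); the value on [] is never used.\<close>
fun graftR :: "'x forest \<Rightarrow> 'x tree list \<Rightarrow> 'x tmag" where
  "graftR F [] = frag_of F"
| "graftR F [s] = graft1 F s"
| "graftR F (s # t # rs) = star (graftR F (t # rs)) (frag_of [s])"

definition graft :: "'x forest \<Rightarrow> 'x forest \<Rightarrow> 'x tmag" where
  "graft F S = graftR F (rev S)"

text \<open>bt T L w: the labelled skeleton of w, with L grafted on its leftmost leaf and,
  for every internal node labelled c, T c grafted on the leftmost leaf of the right
  subtree of that node.\<close>
lemma takeWhile_len_less: "x \<in> set w \<Longrightarrow> \<not> P x \<Longrightarrow> length (takeWhile P w) < length w"
  by (induction w) auto

function bt :: "(nat \<Rightarrow> 'x tree) \<Rightarrow> 'x tree \<Rightarrow> nat list \<Rightarrow> 'x tree" where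
  "bt T L w = (if w = [] then L else
     (let m = Min (set w) in
       Node (bt T L (takeWhile (\<lambda>x. x \<noteq> m) w)) (bt T (T m) (tl (dropWhile (\<lambda>x. x \<noteq> m) w)))))"
  by pat_completeness auto
termination
proof (relation "measure (\<lambda>(T, L, w). length w)", goal_cases)
  case 1 then show ?case by simp
next
  case (2 T L w m)
  have "m \<in> set w" using 2 by simp
  then show ?case
    using takeWhile_len_less[of m w "\<lambda>x. x \<noteq> m"] by simp
next
  case (3 T L w m)
  then show ?case
    using 3 length_dropWhile_le[of "\<lambda>x. x \<noteq> m" w] by (cases w) auto
qed

definition num_orbits :: "(nat \<Rightarrow> nat) \<Rightarrow> nat \<Rightarrow> nat" where
  "num_orbits \<sigma> k = card ((\<lambda>i. orbit \<sigma> i) ` {1..k})"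

definition orbit_minima :: "(nat \<Rightarrow> nat) \<Rightarrow> nat \<Rightarrow> nat list" where
  "orbit_minima \<sigma> k = sorted_list_of_set {i \<in> {1..k}. i = Min (orbit \<sigma> i)}"

text \<open>The tree associated to the orbit with minimum o (trees of F' are indexed from 1).\<close>
definition orbit_tree :: "'x forest \<Rightarrow> (nat \<Rightarrow> nat) \<Rightarrow> nat \<Rightarrow> 'x tree" where
  "orbit_tree F' \<sigma> a =
     (let T = (\<lambda>i. F' ! (i - 1)); m = card (orbit \<sigma> a)
      in bt T (T a) (map (\<lambda>j. (\<sigma> ^^ j) a) [1..<m]))"

definition Psi :: "'x forest \<Rightarrow> (nat \<Rightarrow> nat) \<Rightarrow> 'x forest" where
  "Psi F' \<sigma> = map (orbit_tree F' \<sigma>) (orbit_minima \<sigma> (length F'))"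

end

theory Submission
  imports Defs
begin


lemma fe_add_fun: "frag_extend (\<lambda>x. f x + g x) a = frag_extend f a + frag_extend g a"
  by (simp add: frag_extend_def frag_cmul_distrib2 sum.distrib)

lemma fe_zero_fun: "frag_extend (\<lambda>x. 0) a = 0"
  by (simp add: frag_extend_def)

lemma fe_cmul_fun: "frag_extend (\<lambda>x. frag_cmul c (f x)) a = frag_cmul c (frag_extend f a)"
  by (simp add: frag_extend_def frag_cmul_sum mult.commute)

lemma fe_minus_fun: "frag_extend (\<lambda>x. - f x) a = - frag_extend f a"
  using fe_cmul_fun[of "-1" f a] by simp

lemma fe_diff_fun: "frag_extend (\<lambda>x. f x - g x) a = frag_extend f a - frag_extend g a"
  using fe_add_fun[of f "\<lambda>x. - g x" a] fe_minus_fun[of g a] by simp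

lemma fe_sum_fun: "frag_extend (\<lambda>x. \<Sum>i\<in>I. f i x) a = (\<Sum>i\<in>I. frag_extend (f i) a)"
proof (induction I rule: infinite_finite_induct)
  case (infinite A) then show ?case by (simp add: fe_zero_fun)
next
  case empty then show ?case by (simp add: fe_zero_fun)
next
  case (insert x F) then show ?case by (simp add: fe_add_fun)
qed

lemma fe_compose: "frag_extend f (frag_extend g a) = frag_extend (\<lambda>x. frag_extend f (g x)) a"
proof -
  have "Poly_Mapping.keys a \<subseteq> UNIV" by simp
  then show ?thesis
  proof (induction a rule: frag_induction)
    case zero then show ?case by simp
  next
    case (one x) then show ?case by simp
  next
    case (diff a b) then show ?case by (simp only: frag_extend_diff)
  qed
qed

lemma fe_swap: "frag_extend (\<lambda>u. frag_extend (\<lambda>v. H u v) b) a = frag_extend (\<lambda>v. frag_extend (\<lambda>u. H u v) a) b"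
proof -
  have "Poly_Mapping.keys a \<subseteq> UNIV" by simp
  then show ?thesis
  proof (induction a rule: frag_induction)
    case zero then show ?case by (simp add: fe_zero_fun)
  next
    case (one x) then show ?case by simp
  next
    case (diff a1 a2) then show ?case by (simp only: frag_extend_diff fe_diff_fun)
  qed
qed

lemma fe_cong: "a = b \<Longrightarrow> (\<And>x. x \<in> Poly_Mapping.keys b \<Longrightarrow> f x = g x) \<Longrightarrow> frag_extend f a = frag_extend g b"
  by (metis frag_extend_eq)

lemma fe_of_id: "frag_extend frag_of a = a"
  by (rule frag_expansion[symmetric])

definition B2 :: "('a \<Rightarrow> 'b \<Rightarrow> 'c \<Rightarrow>\<^sub>0 int) \<Rightarrow> ('a \<Rightarrow>\<^sub>0 int) \<Rightarrow> ('b \<Rightarrow>\<^sub>0 int) \<Rightarrow> 'c \<Rightarrow>\<^sub>0 int" where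
  "B2 H a b = frag_extend (\<lambda>u. frag_extend (\<lambda>v. H u v) b) a"

lemma cmul_B2: "cmul = B2 (\<lambda>u v. frag_of (u @ v))"
  by (simp add: fun_eq_iff cmul_def B2_def)
lemma tens_B2: "tens = B2 (\<lambda>u v. frag_of (u, v))"
  by (simp add: fun_eq_iff tens_def B2_def)
lemma bilin_B2: "bilin P = B2 P"
  by (simp add: fun_eq_iff bilin_def B2_def)

lemma B2_of: "B2 H (frag_of u) (frag_of v) = H u v"
  by (simp add: B2_def)
lemma B2_of_left: "B2 H (frag_of u) b = frag_extend (H u) b"
  by (simp add: B2_def)
lemma B2_of_right: "B2 H a (frag_of v) = frag_extend (\<lambda>u. H u v) a"
  by (simp add: B2_def)
lemma B2_left: "B2 H (frag_extend f a) b = frag_extend (\<lambda>x. B2 H (f x) b) a"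
  unfolding B2_def by (rule fe_compose)
lemma B2_right: "B2 H a (frag_extend g b) = frag_extend (\<lambda>y. B2 H a (g y)) b"
  unfolding B2_def
proof -
  have "frag_extend (\<lambda>u. frag_extend (H u) (frag_extend g b)) a
      = frag_extend (\<lambda>u. frag_extend (\<lambda>y. frag_extend (H u) (g y)) b) a"
    by (rule fe_cong) (auto intro: fe_compose)
  also have "\<dots> = frag_extend (\<lambda>y. frag_extend (\<lambda>u. frag_extend (H u) (g y)) a) b"
    by (rule fe_swap)
  finally show "frag_extend (\<lambda>u. frag_extend (\<lambda>v. H u v) (frag_extend g b)) a =
    frag_extend (\<lambda>y. frag_extend (\<lambda>u. frag_extend (\<lambda>v. H u v) (g y)) a) b" by simp
qed
lemma B2_add1: "B2 H (a + a') b = B2 H a b + B2 H a' b"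
  by (simp add: B2_def frag_extend_add)
lemma B2_diff1: "B2 H (a - a') b = B2 H a b - B2 H a' b"
  by (simp add: B2_def frag_extend_diff)
lemma B2_add2: "B2 H a (b + b') = B2 H a b + B2 H a b'"
  by (simp add: B2_def frag_extend_add fe_add_fun)
lemma B2_diff2: "B2 H a (b - b') = B2 H a b - B2 H a b'"
  by (simp add: B2_def frag_extend_diff fe_diff_fun)
lemma B2_zero1[simp]: "B2 H 0 b = 0"
  by (simp add: B2_def)
lemma B2_zero2[simp]: "B2 H a 0 = 0"
  by (simp add: B2_def fe_zero_fun)
lemma B2_cmul1: "B2 H (frag_cmul c a) b = frag_cmul c (B2 H a b)"
  by (simp add: B2_def frag_extend_cmul)
lemma B2_cmul2: "B2 H a (frag_cmul c b) = frag_cmul c (B2 H a b)"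
  by (simp add: B2_def frag_extend_cmul fe_cmul_fun)
lemma B2_sum1: "B2 H (\<Sum>i\<in>I. f i) b = (\<Sum>i\<in>I. B2 H (f i) b)"
  by (induction I rule: infinite_finite_induct) (auto simp: B2_add1)
lemma B2_sum2: "B2 H a (\<Sum>i\<in>I. f i) = (\<Sum>i\<in>I. B2 H a (f i))"
  by (induction I rule: infinite_finite_induct) (auto simp: B2_add2)


definition gr :: "'x tree \<Rightarrow> 'x tmag \<Rightarrow> 'x tmag" where
  "gr y a = frag_extend (\<lambda>u. graft1 u y) a"
definition snocL :: "'x tree \<Rightarrow> 'x tmag \<Rightarrow> 'x tmag" where
  "snocL y a = frag_extend (\<lambda>u. frag_of (u @ [y])) a"
definition sn2 :: "'x tree \<Rightarrow> 'x tmag2 \<Rightarrow> 'x tmag2" where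
  "sn2 y A = frag_extend (\<lambda>(a,b). frag_of (a @ [y], b) + frag_of (a, b @ [y])) A"
definition Gam :: "'x tree \<Rightarrow> 'x tmag2 \<Rightarrow> 'x tmag2" where
  "Gam y A = frag_extend (\<lambda>(a,b). tens (graft1 a y) (frag_of b) + tens (frag_of a) (graft1 b y)) A"

lemma keys_graft1: "v \<in> Poly_Mapping.keys (graft1 u y) \<Longrightarrow> length v = length u"
proof -
  assume v: "v \<in> Poly_Mapping.keys (graft1 u y)"
  have "Poly_Mapping.keys (graft1 u y) \<subseteq> (\<Union>i\<in>{..<length u}. Poly_Mapping.keys (frag_of (u[i := Node (u ! i) y])))"
    unfolding graft1_def by (rule keys_sum)
  with v obtain i where "i < length u" "v = u[i := Node (u ! i) y]" by auto
  then show ?thesis by simp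
qed

lemma graft1_Nil[simp]: "graft1 [] y = 0"
  by (simp add: graft1_def)

lemma graft1_snoc: "graft1 (w @ [x]) y = snocL x (graft1 w y) + frag_of (w @ [Node x y])"
proof -
  have "graft1 (w @ [x]) y = (\<Sum>i<Suc (length w). frag_of ((w @ [x])[i := Node ((w @ [x]) ! i) y]))"
    by (simp add: graft1_def)
  also have "\<dots> = (\<Sum>i<length w. frag_of ((w @ [x])[i := Node ((w @ [x]) ! i) y])) + frag_of (w @ [Node x y])"
    by (simp add: list_update_append)
  also have "(\<Sum>i<length w. frag_of ((w @ [x])[i := Node ((w @ [x]) ! i) y])) = (\<Sum>i<length w. frag_of (w[i := Node (w ! i) y] @ [x]))"
    by (rule sum.cong) (auto simp: list_update_append nth_append)
  also have "\<dots> = snocL x (graft1 w y)"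
    by (simp add: snocL_def graft1_def frag_extend_sum o_def)
  finally show ?thesis .
qed

lemma graft1_Cons: "graft1 (t # u) y = frag_of (Node t y # u) + frag_extend (\<lambda>v. frag_of (t # v)) (graft1 u y)"
proof -
  have "graft1 (t # u) y = (\<Sum>i<Suc (length u). frag_of ((t # u)[i := Node ((t # u) ! i) y]))"
    by (simp add: graft1_def)
  also have "\<dots> = (\<Sum>i<length u. frag_of ((t # u)[Suc i := Node ((t # u) ! Suc i) y])) + frag_of (Node t y # u)"
    by (simp only: sum.lessThan_Suc_shift) simp
  also have "(\<Sum>i<length u. frag_of ((t # u)[Suc i := Node ((t # u) ! Suc i) y])) = frag_extend (\<lambda>v. frag_of (t # v)) (graft1 u y)"
    by (simp add: graft1_def frag_extend_sum o_def)
  finally show ?thesis by (simp add: add.commute)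
qed

lemma cmul_of_right: "cmul a (frag_of v) = frag_extend (\<lambda>u. frag_of (u @ v)) a"
  by (simp add: cmul_B2 B2_of_right)
lemma cmul_of_left: "cmul (frag_of u) b = frag_extend (\<lambda>v. frag_of (u @ v)) b"
  by (simp add: cmul_B2 B2_of_left)
lemma cmul_of: "cmul (frag_of u) (frag_of v) = frag_of (u @ v)"
  by (simp add: cmul_B2 B2_of)
lemma tens_of_right: "tens a (frag_of v) = frag_extend (\<lambda>u. frag_of (u, v)) a"
  by (simp add: tens_B2 B2_of_right)
lemma tens_of_left: "tens (frag_of u) b = frag_extend (\<lambda>v. frag_of (u, v)) b"
  by (simp add: tens_B2 B2_of_left)
lemma tens_of: "tens (frag_of u) (frag_of v) = frag_of (u, v)"
  by (simp add: tens_B2 B2_of)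

lemma graft1_append: "graft1 (u @ v) y = cmul (graft1 u y) (frag_of v) + cmul (frag_of u) (graft1 v y)"
proof (induction u)
  case Nil
  then show ?case by (simp add: cmul_B2 fe_of_id B2_of_left)
next
  case (Cons t u)
  have "graft1 ((t # u) @ v) y = frag_of (Node t y # u @ v) + frag_extend (\<lambda>w. frag_of (t # w)) (graft1 (u @ v) y)"
    by (simp add: graft1_Cons)
  also have "frag_extend (\<lambda>w. frag_of (t # w)) (graft1 (u @ v) y)
     = frag_extend (\<lambda>w. frag_of (t # w)) (cmul (graft1 u y) (frag_of v)) + frag_extend (\<lambda>w. frag_of (t # w)) (cmul (frag_of u) (graft1 v y))"
    by (simp add: Cons frag_extend_add)
  also have "frag_extend (\<lambda>w. frag_of (t # w)) (cmul (graft1 u y) (frag_of v)) = frag_extend (\<lambda>w. frag_of (t # w @ v)) (graft1 u y)"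
    unfolding cmul_of_right fe_compose by simp
  also have "frag_extend (\<lambda>w. frag_of (t # w)) (cmul (frag_of u) (graft1 v y)) = cmul (frag_of (t # u)) (graft1 v y)"
    unfolding cmul_of_left fe_compose by simp
  also have "cmul (graft1 (t # u) y) (frag_of v) = frag_of (Node t y # u @ v) + frag_extend (\<lambda>w. frag_of (t # w @ v)) (graft1 u y)"
    unfolding graft1_Cons cmul_of_right frag_extend_add fe_compose by simp
  ultimately show ?case by (simp add: add.assoc)
qed

lemma gr_of: "gr y (frag_of u) = graft1 u y"
  by (simp add: gr_def)
lemma gr_add: "gr y (a + b) = gr y a + gr y b"
  by (simp add: gr_def frag_extend_add)
lemma gr_diff: "gr y (a - b) = gr y a - gr y b"
  by (simp add: gr_def frag_extend_diff)
lemma gr_cmul: "gr y (frag_cmul c a) = frag_cmul c (gr y a)"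
  by (simp add: gr_def frag_extend_cmul)
lemma gr_sum: "gr y (\<Sum>i\<in>I. f i) = (\<Sum>i\<in>I. gr y (f i))"
  by (induction I rule: infinite_finite_induct) (auto simp: gr_def frag_extend_add)
lemma gr_fe: "gr y (frag_extend f a) = frag_extend (\<lambda>x. gr y (f x)) a"
  unfolding gr_def by (rule fe_compose)

lemma gr_cmul_deriv: "gr y (cmul a b) = cmul (gr y a) b + cmul a (gr y b)"
proof -
  have "gr y (cmul a b) = frag_extend (\<lambda>u. frag_extend (\<lambda>v. graft1 (u @ v) y) b) a"
    unfolding cmul_def gr_fe by (simp add: gr_of)
  also have "\<dots> = frag_extend (\<lambda>u. frag_extend (\<lambda>v. cmul (graft1 u y) (frag_of v)) b) a
      + frag_extend (\<lambda>u. frag_extend (\<lambda>v. cmul (frag_of u) (graft1 v y)) b) a"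
    by (simp add: graft1_append fe_add_fun)
  also have "frag_extend (\<lambda>u. frag_extend (\<lambda>v. cmul (graft1 u y) (frag_of v)) b) a = cmul (gr y a) b"
  proof -
    have "cmul (gr y a) b = frag_extend (\<lambda>u. cmul (graft1 u y) b) a"
      unfolding gr_def cmul_B2 B2_left ..
    also have "\<dots> = frag_extend (\<lambda>u. frag_extend (\<lambda>v. cmul (graft1 u y) (frag_of v)) b) a"
      by (rule fe_cong) (auto simp: fe_of_id cmul_B2 B2_right[symmetric])
    finally show ?thesis by simp
  qed
  also have "frag_extend (\<lambda>u. frag_extend (\<lambda>v. cmul (frag_of u) (graft1 v y)) b) a = cmul a (gr y b)"
  proof -
    have "cmul a (gr y b) = frag_extend (\<lambda>v. cmul a (graft1 v y)) b"
      unfolding gr_def cmul_B2 B2_right ..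
    also have "\<dots> = frag_extend (\<lambda>v. frag_extend (\<lambda>u. cmul (frag_of u) (graft1 v y)) a) b"
      by (rule fe_cong) (auto simp: fe_of_id cmul_B2 B2_left[symmetric])
    also have "\<dots> = frag_extend (\<lambda>u. frag_extend (\<lambda>v. cmul (frag_of u) (graft1 v y)) b) a"
      by (rule fe_swap[symmetric])
    finally show ?thesis by simp
  qed
  finally show ?thesis .
qed


lemma nths_cong_len: "(\<And>i. i < length w \<Longrightarrow> i \<in> A \<longleftrightarrow> i \<in> B) \<Longrightarrow> nths w A = nths w B"
proof (induction w arbitrary: A B)
  case Nil then show ?case by simp
next
  case (Cons x w)
  have "nths w {j. Suc j \<in> A} = nths w {j. Suc j \<in> B}"
    by (rule Cons.IH) (use Cons.prems in auto)
  moreover have "0 \<in> A \<longleftrightarrow> 0 \<in> B" using Cons.prems[of 0] by simp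
  ultimately show ?case by (simp add: nths_Cons)
qed

lemma coprod_Nil: "coprod [] = frag_of ([], [])"
  by (simp add: coprod_def)

lemma sn2_of: "sn2 x (frag_of (a, b)) = frag_of (a @ [x], b) + frag_of (a, b @ [x])"
  by (simp add: sn2_def)

lemma coprod_snoc: "coprod (w @ [y]) = sn2 y (coprod w)"
proof -
  let ?n = "length w"
  let ?A = "{0..<?n}"
  let ?f = "\<lambda>S. frag_of (nths (w @ [y]) S, nths (w @ [y]) (- S))"
  have split: "Pow {0..<length (w @ [y])} = Pow ?A \<union> insert ?n ` Pow ?A"
    by (simp add: atLeast0_lessThan_Suc Pow_insert)
  have disj: "Pow ?A \<inter> insert ?n ` Pow ?A = {}" by auto
  have inj: "inj_on (insert ?n) (Pow ?A)"
  proof (rule inj_onI)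
    fix S T assume "S \<in> Pow ?A" "T \<in> Pow ?A" "insert ?n S = insert ?n T"
    then show "S = T" by (metis Pow_iff atLeastLessThan_iff insert_ident less_irrefl subset_iff)
  qed
  have "coprod (w @ [y]) = sum ?f (Pow ?A \<union> insert ?n ` Pow ?A)"
    unfolding coprod_def split ..
  also have "\<dots> = sum ?f (Pow ?A) + sum ?f (insert ?n ` Pow ?A)"
    by (rule sum.union_disjoint) (auto simp: disj)
  also have "sum ?f (insert ?n ` Pow ?A) = sum (?f \<circ> insert ?n) (Pow ?A)"
    by (rule sum.reindex[OF inj])
  finally have c1: "coprod (w @ [y]) = sum ?f (Pow ?A) + sum (?f \<circ> insert ?n) (Pow ?A)" .
  have e1: "?f S = frag_of (nths w S, nths w (- S) @ [y])" if "S \<in> Pow ?A" for S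
    using that by (auto simp: nths_append)
  have e2: "(?f \<circ> insert ?n) S = frag_of (nths w S @ [y], nths w (- S))" if "S \<in> Pow ?A" for S
  proof -
    have "nths w (insert ?n S) = nths w S" by (rule nths_cong_len) auto
    moreover have "nths w (- insert ?n S) = nths w (- S)" by (rule nths_cong_len) auto
    ultimately show ?thesis using that by (auto simp: nths_append)
  qed
  have "coprod (w @ [y]) = (\<Sum>S\<in>Pow ?A. frag_of (nths w S, nths w (- S) @ [y])) + (\<Sum>S\<in>Pow ?A. frag_of (nths w S @ [y], nths w (- S)))"
  proof -
    have "sum ?f (Pow ?A) = (\<Sum>S\<in>Pow ?A. frag_of (nths w S, nths w (- S) @ [y]))"
      by (rule sum.cong[OF refl]) (rule e1)
    moreover have "sum (?f \<circ> insert ?n) (Pow ?A) = (\<Sum>S\<in>Pow ?A. frag_of (nths w S @ [y], nths w (- S)))"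
      by (rule sum.cong[OF refl]) (rule e2)
    ultimately show ?thesis unfolding c1 by simp
  qed
  also have "\<dots> = sn2 y (coprod w)"
    unfolding coprod_def sn2_def by (simp add: frag_extend_sum o_def sum.distrib add.commute)
  finally show ?thesis .
qed

lemma coprod_single: "coprod [y] = frag_of ([y], []) + frag_of ([], [y])"
  using coprod_snoc[of "[]" y] by (simp add: coprod_Nil sn2_of)

lemma sn2_fe: "sn2 x (frag_extend g C) = frag_extend (\<lambda>p. sn2 x (g p)) C"
  unfolding sn2_def by (rule fe_compose)
lemma Gam_fe: "Gam x (frag_extend g C) = frag_extend (\<lambda>p. Gam x (g p)) C"
  unfolding Gam_def by (rule fe_compose)
lemma sn2_add: "sn2 x (A + B) = sn2 x A + sn2 x B"
  by (simp add: sn2_def frag_extend_add)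
lemma Gam_add: "Gam x (A + B) = Gam x A + Gam x B"
  by (simp add: Gam_def frag_extend_add)
lemma Gam_of: "Gam y (frag_of (a, b)) = tens (graft1 a y) (frag_of b) + tens (frag_of a) (graft1 b y)"
  by (simp add: Gam_def)
lemma sn2_lin: "sn2 x C = frag_extend (\<lambda>p. sn2 x (frag_of p)) C"
  using sn2_fe[of x frag_of C] by (simp add: fe_of_id)
lemma Gam_lin: "Gam x C = frag_extend (\<lambda>p. Gam x (frag_of p)) C"
  using Gam_fe[of x frag_of C] by (simp add: fe_of_id)

lemma tens_add1: "tens (a + a') b = tens a b + tens a' b" by (simp add: tens_B2 B2_add1)
lemma tens_add2: "tens a (b + b') = tens a b + tens a b'" by (simp add: tens_B2 B2_add2)
lemma tens_diff1: "tens (a - a') b = tens a b - tens a' b" by (simp add: tens_B2 B2_diff1)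
lemma tens_diff2: "tens a (b - b') = tens a b - tens a b'" by (simp add: tens_B2 B2_diff2)
lemma cmul_add1: "cmul (a + a') b = cmul a b + cmul a' b" by (simp add: cmul_B2 B2_add1)
lemma cmul_add2: "cmul a (b + b') = cmul a b + cmul a b'" by (simp add: cmul_B2 B2_add2)
lemma cmul_diff1: "cmul (a - a') b = cmul a b - cmul a' b" by (simp add: cmul_B2 B2_diff1)
lemma cmul_diff2: "cmul a (b - b') = cmul a b - cmul a b'" by (simp add: cmul_B2 B2_diff2)

lemma tens_sn2_left: "sn2 x (tens A (frag_of b)) = tens (snocL x A) (frag_of b) + tens A (frag_of (b @ [x]))"
proof -
  have "sn2 x (tens A (frag_of b)) = frag_extend (\<lambda>u. frag_of (u @ [x], b) + frag_of (u, b @ [x])) A"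
    unfolding tens_of_right sn2_fe by (simp add: sn2_of)
  also have "\<dots> = frag_extend (\<lambda>u. frag_of (u @ [x], b)) A + frag_extend (\<lambda>u. frag_of (u, b @ [x])) A"
    by (rule fe_add_fun)
  also have "frag_extend (\<lambda>u. frag_of (u @ [x], b)) A = tens (snocL x A) (frag_of b)"
    unfolding tens_of_right snocL_def fe_compose by simp
  also have "frag_extend (\<lambda>u. frag_of (u, b @ [x])) A = tens A (frag_of (b @ [x]))"
    unfolding tens_of_right ..
  finally show ?thesis .
qed

lemma tens_sn2_right: "sn2 x (tens (frag_of a) B) = tens (frag_of (a @ [x])) B + tens (frag_of a) (snocL x B)"
proof -
  have "sn2 x (tens (frag_of a) B) = frag_extend (\<lambda>u. frag_of (a @ [x], u) + frag_of (a, u @ [x])) B"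
    unfolding tens_of_left sn2_fe by (simp add: sn2_of)
  also have "\<dots> = frag_extend (\<lambda>u. frag_of (a @ [x], u)) B + frag_extend (\<lambda>u. frag_of (a, u @ [x])) B"
    by (rule fe_add_fun)
  also have "frag_extend (\<lambda>u. frag_of (a, u @ [x])) B = tens (frag_of a) (snocL x B)"
    unfolding tens_of_left snocL_def fe_compose by simp
  also have "frag_extend (\<lambda>u. frag_of (a @ [x], u)) B = tens (frag_of (a @ [x])) B"
    unfolding tens_of_left ..
  finally show ?thesis .
qed

lemma sn2_Gam: "sn2 x (Gam y C) + sn2 (Node x y) C = Gam y (sn2 x C)"
proof -
  have l: "sn2 x (Gam y C) + sn2 (Node x y) C = frag_extend (\<lambda>p. sn2 x (Gam y (frag_of p)) + sn2 (Node x y) (frag_of p)) C"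
    by (subst Gam_lin, subst sn2_fe, subst sn2_lin[of "Node x y"]) (rule fe_add_fun[symmetric])
  have r: "Gam y (sn2 x C) = frag_extend (\<lambda>p. Gam y (sn2 x (frag_of p))) C"
    by (subst sn2_lin, subst Gam_fe) (rule refl)
  have pt: "sn2 x (Gam y (frag_of p)) + sn2 (Node x y) (frag_of p) = Gam y (sn2 x (frag_of p))" for p
  proof (cases p)
    case (Pair a b)
    show ?thesis
      unfolding Pair Gam_of sn2_of sn2_add tens_sn2_left tens_sn2_right Gam_add graft1_snoc tens_add1 tens_add2
      by (simp add: tens_of add_ac)
  qed
  show ?thesis unfolding l r by (rule fe_cong) (auto simp: pt)
qed

lemma coprod_graft1: "frag_extend coprod (graft1 w y) = Gam y (coprod w)"
proof (induction w rule: rev_induct)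
  case Nil
  then show ?case by (simp add: coprod_Nil Gam_of tens_B2)
next
  case (snoc x w)
  have "frag_extend coprod (graft1 (w @ [x]) y) = frag_extend coprod (snocL x (graft1 w y)) + coprod (w @ [Node x y])"
    by (simp add: graft1_snoc frag_extend_add)
  also have "frag_extend coprod (snocL x (graft1 w y)) = sn2 x (frag_extend coprod (graft1 w y))"
    unfolding snocL_def fe_compose sn2_fe by (simp add: coprod_snoc)
  finally show ?case by (simp add: snoc coprod_snoc sn2_Gam)
qed


primrec Qn :: "nat \<Rightarrow> 'x forest \<Rightarrow> 'x forest \<Rightarrow> 'x tmag" where
  "Qn 0 f g = frag_of f"
| "Qn (Suc n) f g = (if g = [] then frag_of f else
      gr (last g) (Qn n f (butlast g)) - frag_extend (Qn n f) (graft1 (butlast g) (last g)))"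

definition M :: "'x forest \<Rightarrow> 'x forest \<Rightarrow> 'x tmag" where
  "M f g = Qn (length g) f g"

lemma Qn_len: "length g \<le> n \<Longrightarrow> Qn n f g = Qn (length g) f g"
proof (induction n arbitrary: g)
  case 0 then show ?case by simp
next
  case (Suc n)
  show ?case
  proof (cases g rule: rev_cases)
    case Nil then show ?thesis by simp
  next
    case (snoc g' y)
    have l: "length g' \<le> n" using Suc.prems snoc by simp
    have a: "Qn n f g' = Qn (length g') f g'" using Suc.IH[OF l] .
    have b: "frag_extend (Qn n f) (graft1 g' y) = frag_extend (Qn (length g') f) (graft1 g' y)"
      by (rule fe_cong[OF refl]) (metis Suc.IH keys_graft1 l)
    show ?thesis using a b snoc by simp
  qed
qed

lemma M_Nil[simp]: "M f [] = frag_of f"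
  by (simp add: M_def)

lemma M_snoc: "M f (g @ [y]) = gr y (M f g) - frag_extend (M f) (graft1 g y)"
proof -
  have "frag_extend (Qn (length g) f) (graft1 g y) = frag_extend (M f) (graft1 g y)"
    by (rule fe_cong[OF refl]) (simp add: M_def keys_graft1)
  then show ?thesis by (simp add: M_def)
qed

lemma M_single: "M u [y] = graft1 u y"
  using M_snoc[of u "[]" y] by (simp add: gr_of)

lemma graft1_single: "graft1 [t] y = frag_of [Node t y]"
  by (simp add: graft1_Cons)

lemma ax1: "M [t1] [t2] = frag_of [Node t1 t2]"
  by (simp add: M_single graft1_single)

lemma keys_gr: "v \<in> Poly_Mapping.keys (gr y X) \<Longrightarrow> \<exists>u \<in> Poly_Mapping.keys X. length v = length u"
proof -
  assume a: "v \<in> Poly_Mapping.keys (gr y X)"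
  have "v \<in> (\<Union>u\<in>Poly_Mapping.keys X. Poly_Mapping.keys (graft1 u y))"
    using subsetD[OF keys_frag_extend a[unfolded gr_def]] .
  then obtain u where "u \<in> Poly_Mapping.keys X" "v \<in> Poly_Mapping.keys (graft1 u y)" by blast
  then show ?thesis using keys_graft1 by blast
qed

lemma keys_M: "v \<in> Poly_Mapping.keys (M f g) \<Longrightarrow> length v = length f"
proof (induction g arbitrary: v rule: length_induct)
  case (1 g)
  show ?case
  proof (cases g rule: rev_cases)
    case Nil then show ?thesis using "1.prems" by simp
  next
    case (snoc g' y)
    have v: "v \<in> Poly_Mapping.keys (gr y (M f g') - frag_extend (M f) (graft1 g' y))"
      using "1.prems" unfolding snoc M_snoc .
    have "v \<in> Poly_Mapping.keys (gr y (M f g')) \<or> v \<in> Poly_Mapping.keys (frag_extend (M f) (graft1 g' y))"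
      using subsetD[OF keys_diff v] by simp
    then show ?thesis
    proof
      assume a: "v \<in> Poly_Mapping.keys (gr y (M f g'))"
      obtain u where u: "u \<in> Poly_Mapping.keys (M f g')" "length v = length u" using keys_gr[OF a] by blast
      have "length g' < length g" using snoc by simp
      then show ?thesis using "1.IH"[rule_format, OF _ u(1)] u(2) by simp
    next
      assume a: "v \<in> Poly_Mapping.keys (frag_extend (M f) (graft1 g' y))"
      have "v \<in> (\<Union>x\<in>Poly_Mapping.keys (graft1 g' y). Poly_Mapping.keys (M f x))"
        using subsetD[OF keys_frag_extend a] .
      then obtain w where w: "w \<in> Poly_Mapping.keys (graft1 g' y)" "v \<in> Poly_Mapping.keys (M f w)"
        by blast
      have "length w < length g" using snoc keys_graft1[OF w(1)] by simp
      then show ?thesis using "1.IH"[rule_format, OF _ w(2)] by simp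
    qed
  qed
qed

lemma ax5: "M [] f = frag_cmul (counit f) (frag_of [])"
proof (induction f rule: length_induct)
  case (1 g)
  show ?case
  proof (cases g rule: rev_cases)
    case Nil then show ?thesis by (simp add: counit_def)
  next
    case (snoc g' y)
    have "M [] g' = frag_cmul (counit g') (frag_of [])"
      using "1.IH"[rule_format, of g'] snoc by simp
    then have a: "gr y (M [] g') = 0"
      by (simp add: gr_cmul gr_of)
    have b: "frag_extend (M []) (graft1 g' y) = 0"
    proof (rule frag_extend_eq_0)
      fix v assume v: "v \<in> Poly_Mapping.keys (graft1 g' y)"
      then have "length v = length g'" by (rule keys_graft1)
      moreover have "g' \<noteq> []" using v by auto
      ultimately have "length v < length g" "v \<noteq> []" using snoc by auto
      then show "M [] v = 0" using "1.IH"[rule_format, of v] by (simp add: counit_def)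
    qed
    show ?thesis using a b snoc by (simp add: M_snoc counit_def)
  qed
qed

lemma ax2: "counit_lin (M f g) = counit f * counit g"
proof (cases "f = []")
  case True then show ?thesis by (simp add: ax5 counit_lin_def counit_def)
next
  case False
  have "[] \<notin> Poly_Mapping.keys (M f g)" using keys_M False by fastforce
  then show ?thesis using False by (simp add: counit_lin_def counit_def in_keys_iff)
qed

lemma ax6: "M f (g @ [y]) = bilin M (M f g) (frag_of [y]) - bilin M (frag_of f) (M g [y])"
  by (simp add: M_snoc bilin_B2 B2_of_right B2_of_left M_single gr_def)


lemma fe_tens: "frag_extend K (tens A B) = frag_extend (\<lambda>u. frag_extend (\<lambda>v. K (u, v)) B) A"
proof -
  have "frag_extend K (tens A B) = frag_extend (\<lambda>u. frag_extend K (frag_extend (\<lambda>v. frag_of (u, v)) B)) A"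
    unfolding tens_B2 B2_def by (rule fe_compose)
  also have "\<dots> = frag_extend (\<lambda>u. frag_extend (\<lambda>v. K (u, v)) B) A"
    by (rule fe_cong[OF refl]) (simp add: fe_compose)
  finally show ?thesis .
qed

lemma B2_fe_fe: "B2 H (frag_extend f A) (frag_extend g B) = frag_extend (\<lambda>u. frag_extend (\<lambda>v. B2 H (f u) (g v)) B) A"
proof -
  have "B2 H (frag_extend f A) (frag_extend g B) = frag_extend (\<lambda>u. B2 H (f u) (frag_extend g B)) A"
    by (rule B2_left)
  also have "\<dots> = frag_extend (\<lambda>u. frag_extend (\<lambda>v. B2 H (f u) (g v)) B) A"
    by (rule fe_cong[OF refl]) (rule B2_right)
  finally show ?thesis .
qed

lemma B2_fe_fe': "B2 H (frag_extend f A) (frag_extend g B) = frag_extend (\<lambda>v. frag_extend (\<lambda>u. B2 H (f u) (g v)) A) B"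
  unfolding B2_fe_fe by (rule fe_swap)

lemma fe_of_eq: "frag_extend f (frag_of x) = f x" by simp

lemma Phi_tens: "frag_extend (\<lambda>p. cmul (M f (fst p)) (M g (snd p))) (tens X Y) = cmul (frag_extend (M f) X) (frag_extend (M g) Y)"
  unfolding fe_tens cmul_B2 B2_fe_fe by simp

lemma Phi_step: "gr y (frag_extend (\<lambda>p. cmul (M f (fst p)) (M g (snd p))) C)
   - frag_extend (\<lambda>p. cmul (M f (fst p)) (M g (snd p))) (Gam y C)
   = frag_extend (\<lambda>p. cmul (M f (fst p)) (M g (snd p))) (sn2 y C)"
  (is "gr y (?P C) - ?P (Gam y C) = ?P (sn2 y C)")
proof -
  have l1: "gr y (?P C) = frag_extend (\<lambda>p. gr y (?P (frag_of p))) C"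
    unfolding gr_fe by simp
  have l2: "?P (Gam y C) = frag_extend (\<lambda>p. ?P (Gam y (frag_of p))) C"
    by (subst Gam_lin) (rule fe_compose)
  have l3: "?P (sn2 y C) = frag_extend (\<lambda>p. ?P (sn2 y (frag_of p))) C"
    by (subst sn2_lin) (rule fe_compose)
  have pt: "gr y (?P (frag_of p)) - ?P (Gam y (frag_of p)) = ?P (sn2 y (frag_of p))" for p
  proof (cases p)
    case (Pair a b)
    have "?P (Gam y (frag_of p)) = cmul (frag_extend (M f) (graft1 a y)) (M g b) + cmul (M f a) (frag_extend (M g) (graft1 b y))"
      unfolding Pair Gam_of frag_extend_add Phi_tens by simp
    moreover have "?P (sn2 y (frag_of p)) = cmul (M f (a @ [y])) (M g b) + cmul (M f a) (M g (b @ [y]))"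
      unfolding Pair sn2_of frag_extend_add by simp
    moreover have "gr y (?P (frag_of p)) = cmul (gr y (M f a)) (M g b) + cmul (M f a) (gr y (M g b))"
      unfolding Pair by (simp add: gr_cmul_deriv)
    ultimately show ?thesis
      by (simp add: M_snoc cmul_diff1 cmul_diff2 algebra_simps)
  qed
  show ?thesis unfolding l1 l2 l3 fe_diff_fun[symmetric] by (rule fe_cong[OF refl]) (rule pt)
qed

lemma ax7i: "M (f @ g) h = frag_extend (\<lambda>p. cmul (M f (fst p)) (M g (snd p))) (coprod h)"
  (is "_ = ?P (coprod h)")
proof (induction h rule: length_induct)
  case (1 h)
  show ?case
  proof (cases h rule: rev_cases)
    case Nil then show ?thesis by (simp add: coprod_Nil cmul_of)
  next
    case (snoc h' y)
    have ih1: "M (f @ g) h' = ?P (coprod h')" using "1.IH"[rule_format, of h'] snoc by simp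
    have ih2: "frag_extend (M (f @ g)) (graft1 h' y) = frag_extend (\<lambda>v. ?P (coprod v)) (graft1 h' y)"
    proof (rule fe_cong[OF refl])
      fix v assume "v \<in> Poly_Mapping.keys (graft1 h' y)"
      then have "length v < length h" using keys_graft1 snoc by fastforce
      then show "M (f @ g) v = ?P (coprod v)" using "1.IH"[rule_format, of v] by simp
    qed
    have "frag_extend (\<lambda>v. ?P (coprod v)) (graft1 h' y) = ?P (Gam y (coprod h'))"
      by (simp only: fe_compose[symmetric] coprod_graft1)
    then show ?thesis
      unfolding snoc M_snoc ih1 ih2 coprod_snoc by (simp only: Phi_step)
  qed
qed


definition Kc :: "('x forest \<times> 'x forest) \<Rightarrow> ('x forest \<times> 'x forest) \<Rightarrow> 'x tmag2" where
  "Kc p q = tens (M (fst p) (fst q)) (M (snd p) (snd q))"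

lemma bilin2_M: "bilin2 M A B = B2 Kc A B"
  unfolding bilin2_def B2_def Kc_def by (simp add: case_prod_unfold)

lemma Gam_tens: "Gam y (tens X Y) = tens (gr y X) Y + tens X (gr y Y)"
proof -
  have "Gam y (tens X Y) = frag_extend (\<lambda>u. frag_extend (\<lambda>v. tens (graft1 u y) (frag_of v) + tens (frag_of u) (graft1 v y)) Y) X"
    unfolding Gam_def fe_tens by simp
  also have "\<dots> = frag_extend (\<lambda>u. frag_extend (\<lambda>v. tens (graft1 u y) (frag_of v)) Y) X
      + frag_extend (\<lambda>u. frag_extend (\<lambda>v. tens (frag_of u) (graft1 v y)) Y) X"
    by (simp only: fe_add_fun)
  also have "frag_extend (\<lambda>u. frag_extend (\<lambda>v. tens (graft1 u y) (frag_of v)) Y) X = tens (gr y X) Y"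
    using B2_fe_fe[of "\<lambda>u v. frag_of (u, v)" "\<lambda>u. graft1 u y" X frag_of Y]
    by (simp add: tens_B2[symmetric] fe_of_id gr_def)
  also have "frag_extend (\<lambda>u. frag_extend (\<lambda>v. tens (frag_of u) (graft1 v y)) Y) X = tens X (gr y Y)"
    using B2_fe_fe[of "\<lambda>u v. frag_of (u, v)" frag_of X "\<lambda>u. graft1 u y" Y]
    by (simp add: tens_B2[symmetric] fe_of_id gr_def)
  finally show ?thesis .
qed

lemma Kc_tens: "frag_extend (Kc p) (tens X Y) = tens (frag_extend (M (fst p)) X) (frag_extend (M (snd p)) Y)"
proof -
  have "frag_extend (Kc p) (tens X Y) = frag_extend (\<lambda>u. frag_extend (\<lambda>v. Kc p (u, v)) Y) X"
    by (rule fe_tens)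
  also have "\<dots> = tens (frag_extend (M (fst p)) X) (frag_extend (M (snd p)) Y)"
    unfolding Kc_def tens_B2 B2_fe_fe by simp
  finally show ?thesis .
qed

lemma Kc_step: "Gam y (B2 Kc A B) - B2 Kc A (Gam y B) = B2 Kc A (sn2 y B)"
proof -
  have l1: "Gam y (B2 Kc A B) = frag_extend (\<lambda>p. frag_extend (\<lambda>q. Gam y (Kc p q)) B) A"
    by (simp only: B2_def Gam_fe)
  have l2: "B2 Kc A (Gam y B) = frag_extend (\<lambda>p. frag_extend (\<lambda>q. frag_extend (Kc p) (Gam y (frag_of q))) B) A"
    unfolding B2_def by (rule fe_cong[OF refl]) (subst Gam_lin, rule fe_compose)
  have l3: "B2 Kc A (sn2 y B) = frag_extend (\<lambda>p. frag_extend (\<lambda>q. frag_extend (Kc p) (sn2 y (frag_of q))) B) A"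
    unfolding B2_def by (rule fe_cong[OF refl]) (subst sn2_lin, rule fe_compose)
  have pt: "Gam y (Kc p q) - frag_extend (Kc p) (Gam y (frag_of q)) = frag_extend (Kc p) (sn2 y (frag_of q))" for p q
  proof (cases p; cases q)
    fix a1 a2 b1 b2 assume p: "p = (a1, a2)" and q: "q = (b1, b2)"
    have "Gam y (Kc p q) = tens (gr y (M a1 b1)) (M a2 b2) + tens (M a1 b1) (gr y (M a2 b2))"
      unfolding p q Kc_def by (simp add: Gam_tens)
    moreover have "frag_extend (Kc p) (Gam y (frag_of q)) = tens (frag_extend (M a1) (graft1 b1 y)) (M a2 b2) + tens (M a1 b1) (frag_extend (M a2) (graft1 b2 y))"
      unfolding q Gam_of frag_extend_add Kc_tens p by simp
    moreover have "frag_extend (Kc p) (sn2 y (frag_of q)) = tens (M a1 (b1 @ [y])) (M a2 b2) + tens (M a1 b1) (M a2 (b2 @ [y]))"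
      unfolding q sn2_of frag_extend_add p by (simp add: Kc_def)
    ultimately show ?thesis by (simp add: M_snoc tens_diff1 tens_diff2 algebra_simps)
  qed
  show ?thesis unfolding l1 l2 l3 fe_diff_fun[symmetric]
    by (rule fe_cong[OF refl], rule fe_cong[OF refl]) (rule pt)
qed

lemma ax3i: "frag_extend coprod (M f g) = B2 Kc (coprod f) (coprod g)"
proof (induction g rule: length_induct)
  case (1 g)
  show ?case
  proof (cases g rule: rev_cases)
    case Nil
    have "B2 Kc (coprod f) (coprod []) = frag_extend (\<lambda>p. frag_of p) (coprod f)"
      unfolding coprod_Nil B2_of_right by (rule fe_cong[OF refl]) (simp add: Kc_def tens_of)
    then show ?thesis using Nil by (simp add: fe_of_id)
  next
    case (snoc g' y)
    have ih1: "frag_extend coprod (M f g') = B2 Kc (coprod f) (coprod g')"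
      using "1.IH"[rule_format, of g'] snoc by simp
    have a: "frag_extend coprod (gr y (M f g')) = Gam y (B2 Kc (coprod f) (coprod g'))"
    proof -
      have "frag_extend coprod (gr y (M f g')) = frag_extend (\<lambda>u. Gam y (coprod u)) (M f g')"
        unfolding gr_def fe_compose by (simp only: coprod_graft1)
      also have "\<dots> = Gam y (frag_extend coprod (M f g'))" by (simp only: Gam_fe)
      finally show ?thesis by (simp only: ih1)
    qed
    have b: "frag_extend coprod (frag_extend (M f) (graft1 g' y)) = B2 Kc (coprod f) (Gam y (coprod g'))"
    proof -
      have "frag_extend coprod (frag_extend (M f) (graft1 g' y)) = frag_extend (\<lambda>v. frag_extend coprod (M f v)) (graft1 g' y)"
        by (rule fe_compose)
      also have "\<dots> = frag_extend (\<lambda>v. B2 Kc (coprod f) (coprod v)) (graft1 g' y)"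
      proof (rule fe_cong[OF refl])
        fix v assume "v \<in> Poly_Mapping.keys (graft1 g' y)"
        then have "length v < length g" using keys_graft1 snoc by fastforce
        then show "frag_extend coprod (M f v) = B2 Kc (coprod f) (coprod v)" using "1.IH"[rule_format, of v] by simp
      qed
      also have "\<dots> = B2 Kc (coprod f) (frag_extend coprod (graft1 g' y))" by (rule B2_right[symmetric])
      finally show ?thesis by (simp only: coprod_graft1)
    qed
    show ?thesis unfolding snoc M_snoc frag_extend_diff a b coprod_snoc by (rule Kc_step)
  qed
qed

lemma snocL_cmul: "snocL y (cmul W (frag_of b)) = cmul W (frag_of (b @ [y]))"
  unfolding snocL_def cmul_of_right fe_compose by simp

lemma E1: "gr y (frag_extend (M f) Z) = frag_extend (M f) (snocL y Z) + frag_extend (M f) (gr y Z)"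
proof -
  have "gr y (frag_extend (M f) Z) = frag_extend (\<lambda>c. gr y (M f c)) Z" by (rule gr_fe)
  also have "\<dots> = frag_extend (\<lambda>c. M f (c @ [y]) + frag_extend (M f) (graft1 c y)) Z"
    by (rule fe_cong[OF refl]) (simp add: M_snoc)
  also have "\<dots> = frag_extend (M f) (snocL y Z) + frag_extend (M f) (gr y Z)"
    unfolding fe_add_fun snocL_def gr_def fe_compose by simp
  finally show ?thesis .
qed

definition kap :: "'x forest \<Rightarrow> 'x forest \<Rightarrow> ('x forest \<times> 'x forest) \<Rightarrow> 'x tmag" where
  "kap f g p = frag_extend (M f) (cmul (M g (fst p)) (frag_of (snd p)))"

lemma kap_tens: "frag_extend (kap f g) (tens X Y) = frag_extend (M f) (cmul (frag_extend (M g) X) Y)"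
proof -
  have "cmul (frag_extend (M g) X) Y = frag_extend (\<lambda>u. frag_extend (\<lambda>v. cmul (M g u) (frag_of v)) Y) X"
    using B2_fe_fe[of "\<lambda>u v. frag_of (u @ v)" "M g" X frag_of Y]
    by (simp add: cmul_B2[symmetric] fe_of_id)
  then have "frag_extend (M f) (cmul (frag_extend (M g) X) Y) = frag_extend (\<lambda>u. frag_extend (\<lambda>v. kap f g (u, v)) Y) X"
    unfolding kap_def by (simp add: fe_compose)
  then show ?thesis by (simp add: fe_tens)
qed

lemma kap_step: "gr y (frag_extend (kap f g) C) - frag_extend (kap f g) (Gam y C) = frag_extend (kap f g) (sn2 y C)"
proof -
  have l1: "gr y (frag_extend (kap f g) C) = frag_extend (\<lambda>p. gr y (kap f g p)) C"
    by (rule gr_fe)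
  have l2: "frag_extend (kap f g) (Gam y C) = frag_extend (\<lambda>p. frag_extend (kap f g) (Gam y (frag_of p))) C"
    by (subst Gam_lin) (rule fe_compose)
  have l3: "frag_extend (kap f g) (sn2 y C) = frag_extend (\<lambda>p. frag_extend (kap f g) (sn2 y (frag_of p))) C"
    by (subst sn2_lin) (rule fe_compose)
  have pt: "gr y (kap f g p) - frag_extend (kap f g) (Gam y (frag_of p)) = frag_extend (kap f g) (sn2 y (frag_of p))" for p
  proof (cases p)
    case (Pair a b)
    define W where "W = M g a"
    have "gr y (kap f g p) = frag_extend (M f) (cmul W (frag_of (b @ [y])))
        + (frag_extend (M f) (cmul (gr y W) (frag_of b)) + frag_extend (M f) (cmul W (graft1 b y)))"
      unfolding Pair kap_def E1 W_def by (simp add: snocL_cmul gr_cmul_deriv gr_of frag_extend_add)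
    moreover have "frag_extend (kap f g) (Gam y (frag_of p)) = frag_extend (M f) (cmul (frag_extend (M g) (graft1 a y)) (frag_of b)) + frag_extend (M f) (cmul W (graft1 b y))"
      unfolding Pair Gam_of frag_extend_add kap_tens W_def by simp
    moreover have "frag_extend (kap f g) (sn2 y (frag_of p)) = frag_extend (M f) (cmul (M g (a @ [y])) (frag_of b)) + frag_extend (M f) (cmul W (frag_of (b @ [y])))"
      unfolding Pair sn2_of frag_extend_add W_def by (simp add: kap_def)
    ultimately show ?thesis
      by (simp add: M_snoc W_def[symmetric] cmul_diff1 frag_extend_diff algebra_simps)
  qed
  show ?thesis unfolding l1 l2 l3 fe_diff_fun[symmetric] by (rule fe_cong[OF refl]) (rule pt)
qed

lemma ax8i: "frag_extend (\<lambda>u. M u h) (M f g) = frag_extend (kap f g) (coprod h)"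
proof (induction h rule: length_induct)
  case (1 h)
  show ?case
  proof (cases h rule: rev_cases)
    case Nil
    show ?thesis unfolding Nil coprod_Nil by (simp add: kap_def cmul_of fe_of_id)
  next
    case (snoc h' y)
    have ih1: "frag_extend (\<lambda>u. M u h') (M f g) = frag_extend (kap f g) (coprod h')"
      using "1.IH"[rule_format, of h'] snoc by simp
    have "frag_extend (\<lambda>u. M u (h' @ [y])) (M f g)
        = frag_extend (\<lambda>u. gr y (M u h')) (M f g) - frag_extend (\<lambda>u. frag_extend (\<lambda>v. M u v) (graft1 h' y)) (M f g)"
      unfolding M_snoc by (rule fe_diff_fun)
    also have "frag_extend (\<lambda>u. gr y (M u h')) (M f g) = gr y (frag_extend (kap f g) (coprod h'))"
      unfolding ih1[symmetric] by (rule gr_fe[symmetric])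
    also have "frag_extend (\<lambda>u. frag_extend (\<lambda>v. M u v) (graft1 h' y)) (M f g)
        = frag_extend (\<lambda>v. frag_extend (\<lambda>u. M u v) (M f g)) (graft1 h' y)"
      by (rule fe_swap)
    also have "\<dots> = frag_extend (\<lambda>v. frag_extend (kap f g) (coprod v)) (graft1 h' y)"
    proof (rule fe_cong[OF refl])
      fix v assume "v \<in> Poly_Mapping.keys (graft1 h' y)"
      then have "length v < length h" using keys_graft1 snoc by fastforce
      then show "frag_extend (\<lambda>u. M u v) (M f g) = frag_extend (kap f g) (coprod v)"
        using "1.IH"[rule_format, of v] by simp
    qed
    also have "\<dots> = frag_extend (kap f g) (Gam y (coprod h'))"
      by (simp only: fe_compose[symmetric] coprod_graft1)
    finally show ?thesis unfolding snoc coprod_snoc kap_step[symmetric] .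
  qed
qed


lemma M_is_mag_star: "is_mag_star M"
  unfolding is_mag_star_def
proof (intro conjI allI)
  fix t1 t2 :: "'a tree" show "M [t1] [t2] = frag_of [Node t1 t2]" by (rule ax1)
next
  fix f g :: "'a forest" show "counit_lin (M f g) = counit f * counit g" by (rule ax2)
next
  fix f g :: "'a forest" show "frag_extend coprod (M f g) = bilin2 M (coprod f) (coprod g)"
    by (simp add: ax3i bilin2_M)
next
  fix f :: "'a forest" show "M f [] = frag_of f" by simp
next
  fix f :: "'a forest" show "M [] f = frag_cmul (counit f) (frag_of [])" by (rule ax5)
next
  fix f g :: "'a forest" and y show "M f (g @ [y]) = bilin M (M f g) (frag_of [y]) - bilin M (frag_of f) (M g [y])"
    by (rule ax6)
next
  fix f g h :: "'a forest"
  show "M (f @ g) h = frag_extend (\<lambda>(h1, h2). cmul (M f h1) (M g h2)) (coprod h)"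
    by (simp add: ax7i case_prod_unfold)
next
  fix f g h :: "'a forest"
  have "bilin M (M f g) (frag_of h) = frag_extend (\<lambda>u. M u h) (M f g)"
    by (simp add: bilin_B2 B2_of_right)
  also have "\<dots> = frag_extend (kap f g) (coprod h)" by (rule ax8i)
  also have "\<dots> = frag_extend (\<lambda>(h1, h2). bilin M (frag_of f) (cmul (M g h1) (frag_of h2))) (coprod h)"
    unfolding bilin_B2 B2_of_left case_prod_unfold kap_def[abs_def] ..
  finally show "bilin M (M f g) (frag_of h) = frag_extend (\<lambda>(h1, h2). bilin M (frag_of f) (cmul (M g h1) (frag_of h2))) (coprod h)" .
qed

lemma mag_star_unique:
  assumes P: "is_mag_star P"
  shows "P = M"
proof -
  have a1: "P [t1] [t2] = frag_of [Node t1 t2]" for t1 t2 using P unfolding is_mag_star_def by blast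
  have a4: "P f [] = frag_of f" for f using P unfolding is_mag_star_def by blast
  have a5: "P [] f = frag_cmul (counit f) (frag_of [])" for f using P unfolding is_mag_star_def by blast
  have a6: "P f (g @ [y]) = bilin P (P f g) (frag_of [y]) - bilin P (frag_of f) (P g [y])" for f g y
    using P unfolding is_mag_star_def by blast
  have a7: "P (f @ g) h = frag_extend (\<lambda>(h1, h2). cmul (P f h1) (P g h2)) (coprod h)" for f g h
    using P unfolding is_mag_star_def by blast
  have single: "P u [y] = graft1 u y" for u y
  proof (induction u)
    case Nil then show ?case by (simp add: a5 counit_def)
  next
    case (Cons t u)
    have "P (t # u) [y] = P ([t] @ u) [y]" by simp
    also have "\<dots> = cmul (P [t] [y]) (P u []) + cmul (P [t] []) (P u [y])"
      unfolding a7 coprod_single frag_extend_add by simp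
    also have "\<dots> = graft1 (t # u) y"
      by (simp add: a1 a4 Cons cmul_of cmul_of_left graft1_Cons)
    finally show ?case .
  qed
  have "P f g = M f g" for f g
  proof (induction g rule: length_induct)
    case (1 g)
    show ?case
    proof (cases g rule: rev_cases)
      case Nil then show ?thesis by (simp add: a4)
    next
      case (snoc g' y)
      have ih: "P f g' = M f g'" using "1.IH"[rule_format, of g'] snoc by simp
      have b: "frag_extend (P f) (graft1 g' y) = frag_extend (M f) (graft1 g' y)"
      proof (rule fe_cong[OF refl])
        fix v assume "v \<in> Poly_Mapping.keys (graft1 g' y)"
        then have "length v < length g" using keys_graft1 snoc by fastforce
        then show "P f v = M f v" using "1.IH"[rule_format, of v] by simp
      qed
      have "P f g = frag_extend (\<lambda>u. P u [y]) (P f g') - frag_extend (P f) (graft1 g' y)"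
        unfolding snoc a6 bilin_B2 B2_of_right B2_of_left single ..
      also have "\<dots> = M f g" unfolding ih b snoc M_snoc single gr_def ..
      finally show ?thesis .
    qed
  qed
  then show ?thesis by (intro ext)
qed

lemma magstar_eq_M: "magstar = M"
  unfolding magstar_def
  by (rule the_equality) (rule M_is_mag_star, rule mag_star_unique)


declare bt.simps[simp del]

lemma bt_Nil[simp]: "bt T L [] = L"
  by (subst bt.simps) simp

lemma bt_split:
  assumes "m \<notin> set a" "m = Min (set (a @ m # b))"
  shows "bt T L (a @ m # b) = Node (bt T L a) (bt T (T m) b)"
proof -
  have tw: "takeWhile (\<lambda>x. x \<noteq> m) (a @ m # b) = a" using assms(1) by (induction a) auto
  have dw: "dropWhile (\<lambda>x. x \<noteq> m) (a @ m # b) = m # b" using assms(1) by (induction a) auto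
  have mm: "Min (set (a @ m # b)) = m" using assms(2) by simp
  have ne: "(a @ m # b = []) = False" by simp
  show ?thesis
    by (subst bt.simps) (simp only: ne if_False Let_def mm tw dw list.sel)
qed

lemma bt_cong: "(\<And>x. x \<in> set w \<Longrightarrow> T x = T' x) \<Longrightarrow> L = L' \<Longrightarrow> bt T L w = bt T' L' w"
proof (induction w arbitrary: L L' rule: length_induct)
  case (1 w)
  show ?case
  proof (cases "w = []")
    case True then show ?thesis using "1.prems" by simp
  next
    case False
    define m where "m = Min (set w)"
    have "m \<in> set w" using False m_def by simp
    then obtain a b where w: "w = a @ m # b" "m \<notin> set a" using split_list_first by metis
    have mm: "m = Min (set (a @ m # b))" using m_def w by simp
    have "bt T L (a @ m # b) = Node (bt T L a) (bt T (T m) b)" by (rule bt_split[OF w(2) mm])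
    also have "bt T L a = bt T' L' a"
      using "1.IH"[rule_format, of a] "1.prems" w by simp
    also have "bt T (T m) b = bt T' (T' m) b"
      using "1.IH"[rule_format, of b] "1.prems" w by simp
    also have "Node (bt T' L' a) (bt T' (T' m) b) = bt T' L' (a @ m # b)"
      by (rule bt_split[OF w(2) mm, symmetric])
    finally show ?thesis using w by simp
  qed
qed

lemma bt_front:
  assumes "N \<notin> set v" "\<forall>x\<in>set v. x < N"
  shows "bt T L (N # v) = bt T (Node L (T N)) v"
  using assms
proof (induction v arbitrary: L rule: length_induct)
  case (1 v)
  show ?case
  proof (cases "v = []")
    case True
    then show ?thesis using bt_split[of N "[]" "[]" T L] by simp
  next
    case False
    define m where "m = Min (set v)"
    have "m \<in> set v" using False m_def by simp
    then obtain a b where w: "v = a @ m # b" "m \<notin> set a" using split_list_first by metis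
    have mN: "m < N" using "1.prems" \<open>m \<in> set v\<close> by auto
    have mm1: "m = Min (set ((N # a) @ m # b))"
    proof (rule Min_eqI[symmetric])
      fix y assume "y \<in> set ((N # a) @ m # b)"
      then have "y = N \<or> y \<in> set v" using w by auto
      then show "m \<le> y" using mN m_def by auto
    qed (auto)
    have mm2: "m = Min (set (a @ m # b))" using m_def w by simp
    have "bt T L (N # v) = bt T L ((N # a) @ m # b)" using w by simp
    also have "\<dots> = Node (bt T L (N # a)) (bt T (T m) b)"
      by (rule bt_split) (use w mN mm1 in auto)
    also have "bt T L (N # a) = bt T (Node L (T N)) a"
      using "1.IH"[rule_format, of a] "1.prems" w by simp
    also have "Node (bt T (Node L (T N)) a) (bt T (T m) b) = bt T (Node L (T N)) v"
      unfolding w by (rule bt_split[OF w(2) mm2, symmetric])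
    finally show ?thesis .
  qed
qed

lemma bt_ins:
  assumes "i \<notin> set u" "i \<notin> set v" "N \<notin> set u" "N \<notin> set v" "i < N" "\<forall>x\<in>set u \<union> set v. x < N"
  shows "bt T L (u @ i # N # v) = bt (T(i := Node (T i) (T N))) L (u @ i # v)"
  using assms
proof (induction "length (u @ v)" arbitrary: u v L rule: less_induct)
  case less
  define T' where "T' = T(i := Node (T i) (T N))"
  define m where "m = Min (set (u @ i # v))"
  have mw': "m \<in> set (u @ i # v)" unfolding m_def by (rule Min_in) auto
  have mNle: "m < N" using mw' less.prems by auto
  have mw: "m = Min (set (u @ i # N # v))"
  proof (rule Min_eqI[symmetric])
    fix y assume "y \<in> set (u @ i # N # v)"
    then have "y = N \<or> y \<in> set (u @ i # v)" by auto
    then show "m \<le> y" using mNle m_def by auto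
  qed (use mw' in auto)
  show ?case
  proof (cases "m \<in> set u")
    case True
    then obtain u1 u2 where u: "u = u1 @ m # u2" "m \<notin> set u1" using split_list_first by metis
    have "bt T L (u @ i # N # v) = bt T L (u1 @ m # (u2 @ i # N # v))" using u by simp
    also have "\<dots> = Node (bt T L u1) (bt T (T m) (u2 @ i # N # v))"
    proof (rule bt_split)
      show "m \<notin> set u1" by (rule u(2))
      have eq: "u1 @ m # (u2 @ i # N # v) = u @ i # N # v" using u by simp
      show "m = Min (set (u1 @ m # u2 @ i # N # v))" unfolding eq by (rule mw)
    qed
    also have "bt T (T m) (u2 @ i # N # v) = bt T' (T m) (u2 @ i # v)"
      unfolding T'_def by (rule less.hyps) (use less.prems u in auto)
    also have "bt T L u1 = bt T' L u1"
      by (rule bt_cong) (use less.prems u T'_def in auto)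
    also have "T m = T' m" using less.prems u T'_def by auto
    also have "Node (bt T' L u1) (bt T' (T' m) (u2 @ i # v)) = bt T' L (u1 @ m # (u2 @ i # v))"
    proof (rule bt_split[symmetric])
      show "m \<notin> set u1" by (rule u(2))
      have eq: "u1 @ m # (u2 @ i # v) = u @ i # v" using u by simp
      show "m = Min (set (u1 @ m # u2 @ i # v))" unfolding eq by (rule m_def)
    qed
    finally show ?thesis using u T'_def by simp
  next
    case False
    show ?thesis
    proof (cases "m = i")
      case True
      have "bt T L (u @ i # N # v) = Node (bt T L u) (bt T (T i) (N # v))"
        by (rule bt_split) (use less.prems in simp, use mw True in simp)
      also have "bt T (T i) (N # v) = bt T (Node (T i) (T N)) v"
        by (rule bt_front) (use less.prems in auto)
      also have "bt T (Node (T i) (T N)) v = bt T' (T' i) v"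
        by (rule bt_cong) (use less.prems T'_def in auto)
      also have "bt T L u = bt T' L u"
        by (rule bt_cong) (use less.prems T'_def in auto)
      also have "Node (bt T' L u) (bt T' (T' i) v) = bt T' L (u @ i # v)"
        by (rule bt_split[symmetric]) (use less.prems in simp, use m_def True in simp)
      finally show ?thesis using T'_def by simp
    next
      case mi: False
      then have "m \<in> set v" using mw' False by auto
      then obtain v1 v2 where v: "v = v1 @ m # v2" "m \<notin> set v1" using split_list_first by metis
      have "bt T L (u @ i # N # v) = bt T L ((u @ i # N # v1) @ m # v2)" using v by simp
      also have "\<dots> = Node (bt T L (u @ i # N # v1)) (bt T (T m) v2)"
      proof (rule bt_split)
        show "m \<notin> set (u @ i # N # v1)" using v False mi mNle by auto
        have eq: "(u @ i # N # v1) @ m # v2 = u @ i # N # v" using v by simp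
        show "m = Min (set ((u @ i # N # v1) @ m # v2))" unfolding eq by (rule mw)
      qed
      also have "bt T L (u @ i # N # v1) = bt T' L (u @ i # v1)"
        unfolding T'_def by (rule less.hyps) (use less.prems v in auto)
      also have "bt T (T m) v2 = bt T' (T' m) v2"
        by (rule bt_cong) (use less.prems v T'_def mi in auto)
      also have "Node (bt T' L (u @ i # v1)) (bt T' (T' m) v2) = bt T' L ((u @ i # v1) @ m # v2)"
      proof (rule bt_split[symmetric])
        show "m \<notin> set (u @ i # v1)" using v False mi by auto
        have eq: "(u @ i # v1) @ m # v2 = u @ i # v" using v by simp
        show "m = Min (set ((u @ i # v1) @ m # v2))" unfolding eq by (rule m_def)
      qed
      finally show ?thesis using v T'_def by simp
    qed
  qed
qed


lemma funpow_cancel: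
  assumes "(f ^^ L) a = a" "j < k" "k < L" "(f ^^ j) a = (f ^^ k) a"
  shows "(f ^^ (L - k + j)) a = a"
proof -
  have "(f ^^ (L - k + j)) a = (f ^^ (L - k)) ((f ^^ j) a)" by (simp add: funpow_add)
  also have "\<dots> = (f ^^ (L - k)) ((f ^^ k) a)" using assms(4) by simp
  also have "\<dots> = (f ^^ (L - k + k)) a" by (simp add: funpow_add)
  also have "L - k + k = L" using assms by simp
  finally show ?thesis using assms(1) by simp
qed

lemma card_orbit_eq:
  assumes "(f ^^ L) a = a" "0 < L" "\<And>j. 0 < j \<Longrightarrow> j < L \<Longrightarrow> (f ^^ j) a \<noteq> a"
  shows "orbit f a = (\<lambda>j. (f ^^ j) a) ` {0..<L}" "inj_on (\<lambda>j. (f ^^ j) a) {0..<L}" "card (orbit f a) = L"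
proof -
  show o: "orbit f a = (\<lambda>j. (f ^^ j) a) ` {0..<L}"
  proof -
    have "{(f ^^ m) a |m. m < L} = (\<lambda>j. (f ^^ j) a) ` {0..<L}" by (auto simp: image_def)
    then show ?thesis using orbit_altdef_bounded[OF assms(1,2)] by simp
  qed
  show i: "inj_on (\<lambda>j. (f ^^ j) a) {0..<L}"
  proof (rule inj_onI)
    fix j k assume jk: "j \<in> {0..<L}" "k \<in> {0..<L}" "(f ^^ j) a = (f ^^ k) a"
    show "j = k"
    proof (rule ccontr)
      assume "j \<noteq> k"
      then consider "j < k" | "k < j" by linarith
      then show False
      proof cases
        case 1
        have "(f ^^ (L - k + j)) a = a" by (rule funpow_cancel[OF assms(1) 1]) (use jk in auto)
        moreover have "0 < L - k + j" "L - k + j < L" using 1 jk by auto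
        ultimately show False using assms(3)[of "L - k + j"] by simp
      next
        case 2
        have "(f ^^ (L - j + k)) a = a" by (rule funpow_cancel[OF assms(1) 2]) (use jk in auto)
        moreover have "0 < L - j + k" "L - j + k < L" using 2 jk by auto
        ultimately show False using assms(3)[of "L - j + k"] by simp
      qed
    qed
  qed
  show "card (orbit f a) = L" unfolding o using card_image[OF i] by simp
qed

lemma per_props:
  assumes "permutation f"
  shows "0 < card (orbit f a)" "(f ^^ card (orbit f a)) a = a"
    "\<And>j. 0 < j \<Longrightarrow> j < card (orbit f a) \<Longrightarrow> (f ^^ j) a \<noteq> a"
proof -
  have s: "a \<in> orbit f a" by (rule permutation_self_in_orbit[OF assms])
  define D where "D = funpow_dist1 f a a"
  have D1: "(f ^^ D) a = a" unfolding D_def by (rule funpow_dist1_prop[OF s])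
  have D2: "0 < D" unfolding D_def by simp
  have D3: "(f ^^ j) a \<noteq> a" if "0 < j" "j < D" for j
    using funpow_dist1_least[of j f a a] that unfolding D_def by simp
  have c: "card (orbit f a) = D" by (rule card_orbit_eq(3)[OF D1 D2 D3])
  show "0 < card (orbit f a)" "(f ^^ card (orbit f a)) a = a"
    "\<And>j. 0 < j \<Longrightarrow> j < card (orbit f a) \<Longrightarrow> (f ^^ j) a \<noteq> a"
    using D1 D2 D3 c by auto
qed

lemma per_inj:
  assumes "permutation f" "j < card (orbit f a)" "k < card (orbit f a)" "(f ^^ j) a = (f ^^ k) a"
  shows "j = k"
proof -
  have "inj_on (\<lambda>j. (f ^^ j) a) {0..<card (orbit f a)}"
    by (rule card_orbit_eq(2)[OF per_props(2,1,3)[OF assms(1)]])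
  then show ?thesis using assms(2-4) unfolding inj_on_def by simp
qed

lemma per_orbit:
  assumes "permutation f"
  shows "orbit f a = (\<lambda>j. (f ^^ j) a) ` {0..<card (orbit f a)}"
  using card_orbit_eq(1)[OF per_props(2,1,3)[OF assms(1)]] .

lemma funpow_in_orbit_self: "permutation f \<Longrightarrow> (f ^^ j) a \<in> orbit f a"
  by (rule funpow_in_orbit[OF permutation_self_in_orbit])

lemma orbit_eq_of_mem: "permutation f \<Longrightarrow> b \<in> orbit f a \<Longrightarrow> orbit f b = orbit f a"
  by (metis cyclic_on_orbit' orbit_cyclic_eq3)

lemma orbit_sym: "permutation f \<Longrightarrow> b \<in> orbit f a \<Longrightarrow> a \<in> orbit f b"
  by (metis orbit_eq_of_mem permutation_self_in_orbit)

definition wrd :: "(nat \<Rightarrow> nat) \<Rightarrow> nat \<Rightarrow> nat list" where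
  "wrd f a = map (\<lambda>j. (f ^^ j) a) [1..<card (orbit f a)]"

lemma orbit_tree_wrd: "orbit_tree F' f a = bt (\<lambda>i. F' ! (i - 1)) (F' ! (a - 1)) (wrd f a)"
  by (simp add: orbit_tree_def wrd_def Let_def)

lemma orbit_wrd: "permutation f \<Longrightarrow> orbit f a = insert a (set (wrd f a))"
proof -
  assume p: "permutation f"
  define L where "L = card (orbit f a)"
  have o: "orbit f a = (\<lambda>j. (f ^^ j) a) ` {0..<L}" unfolding L_def by (rule per_orbit[OF p])
  have "{0..<L} = insert 0 {1..<L}" using per_props(1)[OF p, of a] L_def by auto
  then have "orbit f a = insert a ((\<lambda>j. (f ^^ j) a) ` {1..<L})" using o by simp
  moreover have "set (wrd f a) = (\<lambda>j. (f ^^ j) a) ` {1..<L}" unfolding wrd_def L_def by simp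
  ultimately show ?thesis by simp
qed

lemma wrd_ne: "permutation f \<Longrightarrow> a \<notin> set (wrd f a)"
proof
  assume p: "permutation f" and "a \<in> set (wrd f a)"
  then obtain j where j: "1 \<le> j" "j < card (orbit f a)" "(f ^^ j) a = a" unfolding wrd_def by auto
  show False using per_props(3)[OF p j(1)[unfolded One_nat_def Suc_le_eq] j(2)] j(3) by simp
qed


definition insp :: "(nat \<Rightarrow> nat) \<Rightarrow> nat \<Rightarrow> nat \<Rightarrow> nat \<Rightarrow> nat" where
  "insp \<tau> i N = \<tau> \<circ> transpose i N"

context
  fixes \<tau> :: "nat \<Rightarrow> nat" and n i :: nat
  assumes perm: "\<tau> permutes {1..n}" and iin: "i \<in> {1..n}"
begin

lemma tN: "\<tau> (Suc n) = Suc n"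
  using permutes_not_in[OF perm] by simp

lemma s_i: "insp \<tau> i (Suc n) i = Suc n"
  by (simp add: insp_def tN)
lemma s_N: "insp \<tau> i (Suc n) (Suc n) = \<tau> i"
  by (simp add: insp_def)
lemma s_o: "x \<noteq> i \<Longrightarrow> x \<noteq> Suc n \<Longrightarrow> insp \<tau> i (Suc n) x = \<tau> x"
  by (simp add: insp_def)

lemma s_perm: "insp \<tau> i (Suc n) permutes {1..Suc n}"
proof -
  have "transpose i (Suc n) permutes {1..Suc n}" by (rule permutes_swap_id) (use iin in auto)
  moreover have "\<tau> permutes {1..Suc n}" by (rule permutes_subset[OF perm]) auto
  ultimately show ?thesis unfolding insp_def by (rule permutes_compose)
qed

lemma t_permutation: "permutation \<tau>"
  using perm permutation_permutes by blast
lemma s_permutation: "permutation (insp \<tau> i (Suc n))"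
  using s_perm permutation_permutes by blast

lemma t_in: "x \<in> {1..n} \<Longrightarrow> \<tau> x \<in> {1..n}"
  using permutes_in_image[OF perm] by blast

lemma t_pow_in: "x \<in> {1..n} \<Longrightarrow> (\<tau> ^^ j) x \<in> {1..n}"
proof (induction j)
  case 0 then show ?case by simp
next
  case (Suc j)
  have "(\<tau> ^^ Suc j) x = \<tau> ((\<tau> ^^ j) x)" by simp
  then show ?case using t_in[OF Suc.IH[OF Suc.prems]] by simp
qed

lemma t_orbit_sub: "x \<in> {1..n} \<Longrightarrow> orbit \<tau> x \<subseteq> {1..n}"
  by (rule permutes_orbit_subset[OF perm])

lemma O1:
  assumes "x \<in> {1..n}" "x \<notin> orbit \<tau> i"
  shows "(insp \<tau> i (Suc n) ^^ j) x = (\<tau> ^^ j) x"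
proof (induction j)
  case 0 then show ?case by simp
next
  case (Suc j)
  have a: "(\<tau> ^^ j) x \<in> {1..n}" by (rule t_pow_in[OF assms(1)])
  have b: "(\<tau> ^^ j) x \<noteq> i"
  proof
    assume "(\<tau> ^^ j) x = i"
    then have "i \<in> orbit \<tau> x" using funpow_in_orbit_self[OF t_permutation, of j x] by simp
    then have "x \<in> orbit \<tau> i" by (rule orbit_sym[OF t_permutation])
    then show False using assms(2) by simp
  qed
  show ?case using Suc a b by (simp add: s_o)
qed

lemma O1_orbit:
  assumes "x \<in> {1..n}" "x \<notin> orbit \<tau> i"
  shows "orbit (insp \<tau> i (Suc n)) x = orbit \<tau> x"
  unfolding orbit_altdef using O1[OF assms] by simp

lemma O1_wrd:
  assumes "x \<in> {1..n}" "x \<notin> orbit \<tau> i"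
  shows "wrd (insp \<tau> i (Suc n)) x = wrd \<tau> x"
  unfolding wrd_def O1_orbit[OF assms] using O1[OF assms] by simp

context
  fixes ob :: nat
  assumes oin: "ob \<in> orbit \<tau> i"
begin

lemma o_n: "ob \<in> {1..n}" using t_orbit_sub[OF iin] oin by blast

lemma i_orb: "i \<in> orbit \<tau> ob" by (rule orbit_sym[OF t_permutation oin])

definition "LL = card (orbit \<tau> ob)"
definition "pp = funpow_dist \<tau> ob i"

lemma tp: "(\<tau> ^^ pp) ob = i"
  unfolding pp_def by (rule funpow_dist_prop[OF i_orb])

lemma p_lt: "pp < LL"
proof -
  have "i \<in> (\<lambda>j. (\<tau> ^^ j) ob) ` {0..<LL}" using i_orb per_orbit[OF t_permutation, of ob] LL_def by simp
  then obtain j where j: "j < LL" "(\<tau> ^^ j) ob = i" by auto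
  have "pp \<le> j" unfolding pp_def funpow_dist_def by (rule Least_le) (rule j(2))
  then show ?thesis using j by simp
qed

lemma lt_p: "j < pp \<Longrightarrow> (\<tau> ^^ j) ob \<noteq> i"
  unfolding pp_def by (rule funpow_dist_least)

lemma gt_p: "pp < j \<Longrightarrow> j < LL \<Longrightarrow> (\<tau> ^^ j) ob \<noteq> i"
proof
  assume a: "pp < j" "j < LL" "(\<tau> ^^ j) ob = i"
  have "j = pp" by (rule per_inj[OF t_permutation]) (use a p_lt tp LL_def in auto)
  then show False using a by simp
qed

lemma sa: "j \<le> pp \<Longrightarrow> (insp \<tau> i (Suc n) ^^ j) ob = (\<tau> ^^ j) ob"
proof (induction j)
  case 0 then show ?case by simp
next
  case (Suc j)
  have a: "(\<tau> ^^ j) ob \<in> {1..n}" by (rule t_pow_in[OF o_n])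
  have b: "(\<tau> ^^ j) ob \<noteq> i" using lt_p Suc.prems by simp
  show ?case using Suc a b by (simp add: s_o)
qed

lemma sb: "(insp \<tau> i (Suc n) ^^ Suc pp) ob = Suc n"
  using sa[of pp] tp by (simp add: s_i)

lemma sc: "(insp \<tau> i (Suc n) ^^ Suc (Suc pp + d)) ob = (\<tau> ^^ (Suc pp + d)) ob" if "Suc pp + d \<le> LL"
  using that
proof (induction d)
  case 0
  have "(insp \<tau> i (Suc n) ^^ Suc (Suc pp)) ob = insp \<tau> i (Suc n) (Suc n)" using sb by simp
  also have "\<dots> = \<tau> i" by (rule s_N)
  also have "\<dots> = (\<tau> ^^ Suc pp) ob" using tp by simp
  finally show ?case by simp
next
  case (Suc d)
  have h: "(insp \<tau> i (Suc n) ^^ Suc (Suc pp + d)) ob = (\<tau> ^^ (Suc pp + d)) ob" using Suc by simp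
  have a: "(\<tau> ^^ (Suc pp + d)) ob \<in> {1..n}" by (rule t_pow_in[OF o_n])
  have b: "(\<tau> ^^ (Suc pp + d)) ob \<noteq> i" by (rule gt_p) (use Suc.prems in auto)
  have "(insp \<tau> i (Suc n) ^^ Suc (Suc pp + Suc d)) ob = insp \<tau> i (Suc n) ((insp \<tau> i (Suc n) ^^ Suc (Suc pp + d)) ob)"
    by simp
  also have "\<dots> = \<tau> ((\<tau> ^^ (Suc pp + d)) ob)" using h a b by (simp add: s_o)
  finally show ?case by simp
qed

lemma sc': "Suc pp \<le> j \<Longrightarrow> j \<le> LL \<Longrightarrow> (insp \<tau> i (Suc n) ^^ Suc j) ob = (\<tau> ^^ j) ob"
  using sc[of "j - Suc pp"] by simp

lemma s_card: "card (orbit (insp \<tau> i (Suc n)) ob) = Suc LL"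
proof (rule card_orbit_eq(3))
  have "(insp \<tau> i (Suc n) ^^ Suc LL) ob = (\<tau> ^^ LL) ob" by (rule sc') (use p_lt in auto)
  also have "\<dots> = ob" using per_props(2)[OF t_permutation] LL_def by simp
  finally show "(insp \<tau> i (Suc n) ^^ Suc LL) ob = ob" .
  show "0 < Suc LL" by simp
  fix j assume j: "0 < j" "j < Suc LL"
  have nz: "(\<tau> ^^ k) ob \<noteq> ob" if "0 < k" "k < LL" for k
    using per_props(3)[OF t_permutation] that LL_def by simp
  consider "j \<le> pp" | "j = Suc pp" | "Suc pp < j" by linarith
  then show "(insp \<tau> i (Suc n) ^^ j) ob \<noteq> ob"
  proof cases
    case 1 then show ?thesis using sa[OF 1] nz[of j] j p_lt by simp
  next
    case 2 then show ?thesis using sb o_n by auto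
  next
    case 3
    obtain k where k: "j = Suc k" using j by (cases j) auto
    have "(insp \<tau> i (Suc n) ^^ j) ob = (\<tau> ^^ k) ob" unfolding k by (rule sc') (use 3 k j in auto)
    then show ?thesis using nz[of k] 3 k j by simp
  qed
qed

lemma wrd_t_split: "wrd \<tau> ob = map (\<lambda>j. (\<tau> ^^ j) ob) [1..<Suc pp] @ map (\<lambda>j. (\<tau> ^^ j) ob) [Suc pp..<LL]"
proof -
  have "[1..<LL] = [1..<Suc pp] @ [Suc pp..<LL]"
    using upt_add_eq_append[of 1 "Suc pp" "LL - Suc pp"] p_lt by simp
  then show ?thesis unfolding wrd_def LL_def[symmetric] by simp
qed

lemma wrd_s_split: "wrd (insp \<tau> i (Suc n)) ob = map (\<lambda>j. (\<tau> ^^ j) ob) [1..<Suc pp] @ Suc n # map (\<lambda>j. (\<tau> ^^ j) ob) [Suc pp..<LL]"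
proof -
  let ?s = "insp \<tau> i (Suc n)"
  have "[1..<Suc LL] = [1..<Suc pp] @ [Suc pp..<Suc LL]"
    using upt_add_eq_append[of 1 "Suc pp" "Suc LL - Suc pp"] p_lt by simp
  moreover have "[Suc pp..<Suc LL] = Suc pp # map Suc [Suc pp..<LL]"
    using p_lt by (simp add: upt_conv_Cons map_Suc_upt)
  ultimately have u: "[1..<Suc LL] = [1..<Suc pp] @ Suc pp # map Suc [Suc pp..<LL]" by simp
  have m1: "map (\<lambda>j. (?s ^^ j) ob) [1..<Suc pp] = map (\<lambda>j. (\<tau> ^^ j) ob) [1..<Suc pp]"
    by (rule map_cong[OF refl], rule sa) auto
  have m2: "map (\<lambda>j. (?s ^^ j) ob) (map Suc [Suc pp..<LL]) = map (\<lambda>j. (\<tau> ^^ j) ob) [Suc pp..<LL]"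
    unfolding map_map o_def by (rule map_cong[OF refl], rule sc') auto
  show ?thesis unfolding wrd_def s_card u using m1 m2 sb by simp
qed

lemma s_orbit: "orbit (insp \<tau> i (Suc n)) ob = insert (Suc n) (orbit \<tau> ob)"
proof -
  have "orbit (insp \<tau> i (Suc n)) ob = insert ob (set (wrd (insp \<tau> i (Suc n)) ob))"
    by (rule orbit_wrd[OF s_permutation])
  also have "\<dots> = insert (Suc n) (insert ob (set (wrd \<tau> ob)))"
    unfolding wrd_s_split wrd_t_split by auto
  also have "insert ob (set (wrd \<tau> ob)) = orbit \<tau> ob" by (rule orbit_wrd[OF t_permutation, symmetric])
  finally show ?thesis .
qed


lemma T1:
  fixes G :: "'x forest" and y :: "'x tree"
  assumes lenG: "length G = n"
  shows "orbit_tree (G @ [y]) (insp \<tau> i (Suc n)) ob = orbit_tree (G[i - 1 := Node (G ! (i - 1)) y]) \<tau> ob"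
proof -
  define Ts where "Ts = (\<lambda>x. (G @ [y]) ! (x - 1))"
  define Tt where "Tt = (\<lambda>x. (G[i - 1 := Node (G ! (i - 1)) y]) ! (x - 1))"
  have TsTt: "Ts x = Tt x" if "x \<in> {1..n}" "x \<noteq> i" for x
    using that iin lenG by (auto simp: Ts_def Tt_def nth_append nth_list_update)
  have Tti: "Tt i = Node (Ts i) (Ts (Suc n))"
    using iin lenG by (auto simp: Ts_def Tt_def nth_append nth_list_update)
  define U where "U = map (\<lambda>j. (\<tau> ^^ j) ob) [1..<Suc pp]"
  define V where "V = map (\<lambda>j. (\<tau> ^^ j) ob) [Suc pp..<LL]"
  have ws: "wrd (insp \<tau> i (Suc n)) ob = U @ Suc n # V" unfolding U_def V_def by (rule wrd_s_split)
  have wt: "wrd \<tau> ob = U @ V" unfolding U_def V_def by (rule wrd_t_split)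
  have Vn: "x \<in> {1..n}" if "x \<in> set V" for x using that t_pow_in[OF o_n] by (auto simp: V_def)
  have Un: "x \<in> {1..n}" if "x \<in> set U" for x using that t_pow_in[OF o_n] by (auto simp: U_def)
  have Vi: "i \<notin> set V"
  proof
    assume "i \<in> set V"
    then have "i \<in> (\<lambda>j. (\<tau> ^^ j) ob) ` {Suc pp..<LL}" by (simp add: V_def)
    then obtain j where "j \<in> {Suc pp..<LL}" "i = (\<tau> ^^ j) ob" by (rule imageE)
    then show False using gt_p[of j] by simp
  qed
  have lhs: "orbit_tree (G @ [y]) (insp \<tau> i (Suc n)) ob = bt Ts (Ts ob) (U @ Suc n # V)"
    unfolding orbit_tree_wrd ws Ts_def ..
  have rhs: "orbit_tree (G[i - 1 := Node (G ! (i - 1)) y]) \<tau> ob = bt Tt (Tt ob) (U @ V)"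
    unfolding orbit_tree_wrd wt Tt_def ..
  show ?thesis
  proof (cases "pp = 0")
    case True
    have obi: "ob = i" using tp True by simp
    have U0: "U = []" using True by (simp add: U_def)
    have VN1: "Suc n \<notin> set V" using Vn[of "Suc n"] by auto
    have VN2: "\<forall>x\<in>set V. x < Suc n" using Vn by (simp add: le_imp_less_Suc)
    have "bt Ts (Ts ob) (U @ Suc n # V) = bt Ts (Node (Ts i) (Ts (Suc n))) V"
      unfolding U0 obi append_Nil by (rule bt_front[OF VN1 VN2])
    also have "\<dots> = bt Tt (Tt i) V"
      by (rule bt_cong) (use Vn Vi TsTt Tti in auto)
    finally show ?thesis using lhs rhs U0 obi by simp
  next
    case False
    define U' where "U' = map (\<lambda>j. (\<tau> ^^ j) ob) [1..<pp]"
    have UU: "U = U' @ [i]" using False tp by (simp add: U_def U'_def)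
    have U'i: "i \<notin> set U'"
    proof
      assume "i \<in> set U'"
      then have "i \<in> (\<lambda>j. (\<tau> ^^ j) ob) ` {1..<pp}" by (simp add: U'_def)
      then obtain j where "j \<in> {1..<pp}" "i = (\<tau> ^^ j) ob" by (rule imageE)
      then show False using lt_p[of j] by simp
    qed
    have U'n: "x \<in> {1..n}" if "x \<in> set U'" for x using that Un UU by auto
    have obi: "ob \<noteq> i"
    proof
      assume "ob = i"
      then have "pp = 0" unfolding pp_def by (simp add: funpow_dist_0)
      then show False using False by simp
    qed
    have "bt Ts (Ts ob) (U' @ i # Suc n # V) = bt (Ts(i := Node (Ts i) (Ts (Suc n)))) (Ts ob) (U' @ i # V)"
    proof (rule bt_ins)
      show "Suc n \<notin> set U'" using U'n[of "Suc n"] by auto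
      show "Suc n \<notin> set V" using Vn[of "Suc n"] by auto
      show "\<forall>x\<in>set U' \<union> set V. x < Suc n" using U'n Vn by (auto simp: le_imp_less_Suc)
      show "i < Suc n" using iin by simp
    qed (use U'i Vi in auto)
    also have "\<dots> = bt Tt (Tt ob) (U' @ i # V)"
    proof (rule bt_cong)
      fix x assume "x \<in> set (U' @ i # V)"
      then have "x \<in> {1..n}" using U'n Vn iin by auto
      then show "(Ts(i := Node (Ts i) (Ts (Suc n)))) x = Tt x" using TsTt Tti by auto
    next
      show "Ts ob = Tt ob" using TsTt o_n obi by simp
    qed
    finally show ?thesis unfolding lhs rhs UU by simp
  qed
qed

end

lemma T2:
  fixes G :: "'x forest" and y :: "'x tree"
  assumes lenG: "length G = n" and x: "x \<in> {1..n}" "x \<notin> orbit \<tau> i"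
  shows "orbit_tree (G @ [y]) (insp \<tau> i (Suc n)) x = orbit_tree (G[i - 1 := Node (G ! (i - 1)) y]) \<tau> x"
proof -
  have io: "i \<notin> orbit \<tau> x" using x orbit_sym[OF t_permutation] by blast
  have xi: "x \<noteq> i" using x permutation_self_in_orbit[OF t_permutation] by blast
  have sub: "set (wrd \<tau> x) \<subseteq> orbit \<tau> x" using orbit_wrd[OF t_permutation, of x] by blast
  show ?thesis unfolding orbit_tree_wrd O1_wrd[OF x]
  proof (rule bt_cong)
    fix z assume "z \<in> set (wrd \<tau> x)"
    then have "z \<in> orbit \<tau> x" using sub by blast
    then have "z \<in> {1..n}" "z \<noteq> i" using t_orbit_sub[OF x(1)] io by auto
    then show "(G @ [y]) ! (z - 1) = G[i - 1 := Node (G ! (i - 1)) y] ! (z - 1)"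
      using lenG iin by (auto simp: nth_append nth_list_update)
  next
    show "(G @ [y]) ! (x - 1) = G[i - 1 := Node (G ! (i - 1)) y] ! (x - 1)"
      using lenG iin x xi by (auto simp: nth_append nth_list_update)
  qed
qed

lemma fin_orbit_t: "x \<in> {1..n} \<Longrightarrow> finite (orbit \<tau> x)"
  using t_orbit_sub finite_subset by blast

lemma T3: "{x \<in> {1..Suc n}. x = Min (orbit (insp \<tau> i (Suc n)) x)} = {x \<in> {1..n}. x = Min (orbit \<tau> x)}"
proof -
  have eq: "Min (orbit (insp \<tau> i (Suc n)) x) = Min (orbit \<tau> x)" if x: "x \<in> {1..n}" for x
  proof (cases "x \<in> orbit \<tau> i")
    case True
    have ne: "orbit \<tau> x \<noteq> {}" using permutation_self_in_orbit[OF t_permutation] by blast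
    have "Min (orbit \<tau> x) \<in> orbit \<tau> x" by (rule Min_in[OF fin_orbit_t[OF x] ne])
    then have lt: "Min (orbit \<tau> x) < Suc n" using t_orbit_sub[OF x] by auto
    have "Min (orbit (insp \<tau> i (Suc n)) x) = Min (insert (Suc n) (orbit \<tau> x))"
      using s_orbit[OF True] by simp
    also have "\<dots> = min (Suc n) (Min (orbit \<tau> x))" by (rule Min_insert[OF fin_orbit_t[OF x] ne])
    also have "\<dots> = Min (orbit \<tau> x)" using lt by simp
    finally show ?thesis .
  next
    case False then show ?thesis using O1_orbit[OF x False] by simp
  qed
  have N: "Suc n \<noteq> Min (orbit (insp \<tau> i (Suc n)) (Suc n))"
  proof -
    have "Suc n \<in> orbit (insp \<tau> i (Suc n)) i" using s_i by (metis orbit.base)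
    then have io: "i \<in> orbit (insp \<tau> i (Suc n)) (Suc n)" by (rule orbit_sym[OF s_permutation])
    have fin: "finite (orbit (insp \<tau> i (Suc n)) (Suc n))"
      using permutes_orbit_subset[OF s_perm, of "Suc n"] finite_subset by auto
    have "Min (orbit (insp \<tau> i (Suc n)) (Suc n)) \<le> i" by (rule Min_le[OF fin io])
    then show ?thesis using iin by auto
  qed
  show ?thesis
  proof (rule set_eqI)
    fix x show "x \<in> {x \<in> {1..Suc n}. x = Min (orbit (insp \<tau> i (Suc n)) x)} \<longleftrightarrow> x \<in> {x \<in> {1..n}. x = Min (orbit \<tau> x)}"
    proof (cases "x = Suc n")
      case True then show ?thesis using N by auto
    next
      case False
      then have "x \<in> {1..Suc n} \<longleftrightarrow> x \<in> {1..n}" by auto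
      then show ?thesis using eq by auto
    qed
  qed
qed

end


lemma mins_fin: "finite {x \<in> {1..n::nat}. P x}" by simp

lemma num_orbits_mins:
  assumes p: "f permutes {1..n}"
  shows "num_orbits f n = card {x \<in> {1..n}. x = Min (orbit f x)}"
proof -
  let ?S = "{x \<in> {1..n}. x = Min (orbit f x)}"
  have pf: "permutation f" using p permutation_permutes by blast
  have sub: "x \<in> {1..n} \<Longrightarrow> orbit f x \<subseteq> {1..n}" for x by (rule permutes_orbit_subset[OF p])
  have fin: "x \<in> {1..n} \<Longrightarrow> finite (orbit f x)" for x using sub finite_subset by blast
  have ne: "orbit f x \<noteq> {}" for x using permutation_self_in_orbit[OF pf] by blast
  have img: "(\<lambda>i. orbit f i) ` {1..n} = (\<lambda>i. orbit f i) ` ?S"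
  proof
    show "(\<lambda>i. orbit f i) ` ?S \<subseteq> (\<lambda>i. orbit f i) ` {1..n}" by auto
    show "(\<lambda>i. orbit f i) ` {1..n} \<subseteq> (\<lambda>i. orbit f i) ` ?S"
    proof
      fix Ob assume "Ob \<in> (\<lambda>i. orbit f i) ` {1..n}"
      then obtain x where x: "x \<in> {1..n}" "Ob = orbit f x" by blast
      define m where "m = Min (orbit f x)"
      have m: "m \<in> orbit f x" unfolding m_def by (rule Min_in[OF fin[OF x(1)] ne])
      have om: "orbit f m = orbit f x" by (rule orbit_eq_of_mem[OF pf m])
      have "m \<in> {1..n}" using m sub[OF x(1)] by blast
      then have "m \<in> ?S" using om m_def by simp
      then show "Ob \<in> (\<lambda>i. orbit f i) ` ?S" using om x by blast
    qed
  qed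
  have inj: "inj_on (\<lambda>i. orbit f i) ?S"
  proof (rule inj_onI)
    fix x x' assume "x \<in> ?S" "x' \<in> ?S" "orbit f x = orbit f x'"
    then show "x = x'" by (metis (mono_tags, lifting) mem_Collect_eq)
  qed
  show ?thesis unfolding num_orbits_def img using card_image[OF inj] by simp
qed

lemma case_B:
  fixes G :: "'x forest" and y :: "'x tree"
  assumes perm: "\<tau> permutes {1..n}" and iin: "i \<in> {1..n}" and lenG: "length G = n"
  shows "Psi (G @ [y]) (insp \<tau> i (Suc n)) = Psi (G[i - 1 := Node (G ! (i - 1)) y]) \<tau>"
    "num_orbits (insp \<tau> i (Suc n)) (Suc n) = num_orbits \<tau> n"
proof -
  have m: "orbit_minima (insp \<tau> i (Suc n)) (Suc n) = orbit_minima \<tau> n"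
    unfolding orbit_minima_def T3[OF perm iin] ..
  show "Psi (G @ [y]) (insp \<tau> i (Suc n)) = Psi (G[i - 1 := Node (G ! (i - 1)) y]) \<tau>"
    unfolding Psi_def
  proof (simp only: length_append_singleton length_list_update lenG m, rule map_cong[OF refl])
    fix x assume "x \<in> set (orbit_minima \<tau> n)"
    then have x: "x \<in> {1..n}" unfolding orbit_minima_def by simp
    show "orbit_tree (G @ [y]) (insp \<tau> i (Suc n)) x = orbit_tree (G[i - 1 := Node (G ! (i - 1)) y]) \<tau> x"
    proof (cases "x \<in> orbit \<tau> i")
      case True show ?thesis by (rule T1[OF perm iin True lenG])
    next
      case False show ?thesis by (rule T2[OF perm iin lenG x False])
    qed
  qed
  show "num_orbits (insp \<tau> i (Suc n)) (Suc n) = num_orbits \<tau> n"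
    unfolding num_orbits_mins[OF s_perm[OF perm iin]] num_orbits_mins[OF perm] T3[OF perm iin] ..
qed

lemma sorted_list_snoc_max:
  assumes "finite A" "\<forall>x\<in>A. x < (N::nat)"
  shows "sorted_list_of_set (insert N A) = sorted_list_of_set A @ [N]"
proof -
  have "N \<notin> A" using assms by auto
  then have "sorted_list_of_set (insert N A) = insort N (sorted_list_of_set A)"
    using assms(1) by (simp add: sorted_list_of_set_insert_remove)
  also have "\<dots> = sorted_list_of_set A @ [N]"
    by (rule sorted_insort_is_snoc) (use assms in \<open>auto simp: less_imp_le\<close>)
  finally show ?thesis .
qed

lemma case_A:
  fixes G :: "'x forest" and y :: "'x tree"
  assumes perm: "\<tau> permutes {1..n}" and lenG: "length G = n"
  shows "Psi (G @ [y]) \<tau> = Psi G \<tau> @ [y]"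
    "num_orbits \<tau> (Suc n) = Suc (num_orbits \<tau> n)"
proof -
  have pf: "permutation \<tau>" using perm permutation_permutes by blast
  have tN: "\<tau> (Suc n) = Suc n" using permutes_not_in[OF perm] by simp
  have oN: "orbit \<tau> (Suc n) = {Suc n}" using tN by (simp only: orbit_eq_singleton_iff)
  have perm': "\<tau> permutes {1..Suc n}" by (rule permutes_subset[OF perm]) auto
  have S: "{x \<in> {1..Suc n}. x = Min (orbit \<tau> x)} = insert (Suc n) {x \<in> {1..n}. x = Min (orbit \<tau> x)}"
  proof (rule set_eqI)
    fix x show "x \<in> {x \<in> {1..Suc n}. x = Min (orbit \<tau> x)} \<longleftrightarrow> x \<in> insert (Suc n) {x \<in> {1..n}. x = Min (orbit \<tau> x)}"
    proof (cases "x = Suc n")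
      case True then show ?thesis using oN by simp
    next
      case False
      then have e: "x \<in> {1..Suc n} \<longleftrightarrow> x \<in> {1..n}" by auto
      show ?thesis by (simp only: mem_Collect_eq insert_iff e False simp_thms)
    qed
  qed
  have m: "orbit_minima \<tau> (Suc n) = orbit_minima \<tau> n @ [Suc n]"
    unfolding orbit_minima_def S by (rule sorted_list_snoc_max) auto
  have tr: "orbit_tree (G @ [y]) \<tau> x = orbit_tree G \<tau> x" if x: "x \<in> {1..n}" for x
    unfolding orbit_tree_wrd
  proof (rule bt_cong)
    fix z assume "z \<in> set (wrd \<tau> x)"
    then have "z \<in> orbit \<tau> x" using orbit_wrd[OF pf, of x] by blast
    then have "z \<in> {1..n}" using permutes_orbit_subset[OF perm x] by blast
    then show "(G @ [y]) ! (z - 1) = G ! (z - 1)" using lenG by (auto simp: nth_append)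
  next
    show "(G @ [y]) ! (x - 1) = G ! (x - 1)" using lenG x by (auto simp: nth_append)
  qed
  have trN: "orbit_tree (G @ [y]) \<tau> (Suc n) = y"
  proof -
    have "(G @ [y]) ! n = y" using lenG by (metis nth_append_length)
    then show ?thesis using oN by (simp add: orbit_tree_def)
  qed
  show "Psi (G @ [y]) \<tau> = Psi G \<tau> @ [y]"
    unfolding Psi_def
  proof (simp only: length_append_singleton lenG m map_append list.map trN)
    have "map (orbit_tree (G @ [y]) \<tau>) (orbit_minima \<tau> n) = map (orbit_tree G \<tau>) (orbit_minima \<tau> n)"
      by (rule map_cong[OF refl]) (rule tr, simp add: orbit_minima_def)
    then show "map (orbit_tree (G @ [y]) \<tau>) (orbit_minima \<tau> n) @ [y] = map (orbit_tree G \<tau>) (orbit_minima \<tau> n) @ [y]"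
      by simp
  qed
  show "num_orbits \<tau> (Suc n) = Suc (num_orbits \<tau> n)"
    unfolding num_orbits_mins[OF perm'] num_orbits_mins[OF perm] S by simp
qed

lemma Psi_ne:
  assumes perm: "\<tau> permutes {1..n}" and n: "1 \<le> n" and that: "length G = n"
  shows "Psi G \<tau> \<noteq> []"
proof -
  have pf: "permutation \<tau>" using perm permutation_permutes by blast
  have sub: "orbit \<tau> 1 \<subseteq> {1..n}" by (rule permutes_orbit_subset[OF perm]) (use n in simp)
  have fin: "finite (orbit \<tau> 1)" using sub finite_subset by blast
  have "1 \<in> orbit \<tau> 1" by (rule permutation_self_in_orbit[OF pf])
  then have "Min (orbit \<tau> 1) = 1" using sub fin by (intro Min_eqI) auto
  then have "1 \<in> {x \<in> {1..n}. x = Min (orbit \<tau> x)}" using n by simp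
  then have "orbit_minima \<tau> n \<noteq> []" unfolding orbit_minima_def by auto
  then show ?thesis unfolding Psi_def using that by simp
qed


lemma perm_fix_iff: "(\<sigma> permutes {1..Suc n} \<and> \<sigma> (Suc n) = Suc n) \<longleftrightarrow> \<sigma> permutes {1..n}"
proof
  assume a: "\<sigma> permutes {1..Suc n} \<and> \<sigma> (Suc n) = Suc n"
  then show "\<sigma> permutes {1..n}"
    unfolding permutes_def by (metis atLeastAtMost_iff le_Suc_eq)
next
  assume a: "\<sigma> permutes {1..n}"
  show "\<sigma> permutes {1..Suc n} \<and> \<sigma> (Suc n) = Suc n"
    using permutes_subset[OF a, of "{1..Suc n}"] permutes_not_in[OF a, of "Suc n"] by auto
qed

lemma insp_inj: "insp \<tau> i N = insp \<tau>' i N \<Longrightarrow> \<tau> = \<tau>'"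
proof -
  assume "insp \<tau> i N = insp \<tau>' i N"
  then have "insp \<tau> i N \<circ> transpose i N = insp \<tau>' i N \<circ> transpose i N" by simp
  then show "\<tau> = \<tau>'" by (simp add: insp_def comp_assoc)
qed

lemma perm_decomp:
  fixes h :: "(nat \<Rightarrow> nat) \<Rightarrow> 'a::comm_monoid_add"
  shows "(\<Sum>\<sigma>\<in>{\<sigma>. \<sigma> permutes {1..Suc n}}. h \<sigma>) =
     (\<Sum>\<tau>\<in>{\<tau>. \<tau> permutes {1..n}}. h \<tau>) + (\<Sum>i\<in>{1..n}. \<Sum>\<tau>\<in>{\<tau>. \<tau> permutes {1..n}}. h (insp \<tau> i (Suc n)))"
proof -
  let ?S = "\<lambda>n. {\<sigma>. \<sigma> permutes {1..n::nat}}"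
  let ?B = "\<lambda>i. (\<lambda>\<tau>. insp \<tau> i (Suc n)) ` ?S n"
  have fin: "finite (?S m)" for m using finite_permutations[of "{1..m}"] by simp
  have A: "{\<sigma> \<in> ?S (Suc n). \<sigma> (Suc n) = Suc n} = ?S n" using perm_fix_iff by blast
  have B: "{\<sigma> \<in> ?S (Suc n). \<sigma> (Suc n) \<noteq> Suc n} = (\<Union>i\<in>{1..n}. ?B i)"
  proof
    show "{\<sigma> \<in> ?S (Suc n). \<sigma> (Suc n) \<noteq> Suc n} \<subseteq> (\<Union>i\<in>{1..n}. ?B i)"
    proof
      fix \<sigma> assume s: "\<sigma> \<in> {\<sigma> \<in> ?S (Suc n). \<sigma> (Suc n) \<noteq> Suc n}"
      then have sp: "\<sigma> permutes {1..Suc n}" and sN: "\<sigma> (Suc n) \<noteq> Suc n" by auto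
      obtain i where si: "\<sigma> i = Suc n" using sp unfolding permutes_def by metis
      have iN: "i \<noteq> Suc n"
      proof
        assume h: "i = Suc n"
        have "\<sigma> (Suc n) = Suc n" using si unfolding h .
        then show False using sN by simp
      qed
      have iin: "i \<in> {1..Suc n}"
      proof (rule ccontr)
        assume a: "i \<notin> {1..Suc n}"
        then have "\<sigma> i = i" using permutes_not_in[OF sp] by simp
        then have "i = Suc n" using si by simp
        then show False using a by simp
      qed
      then have iin': "i \<in> {1..n}" using iN by auto
      define \<tau> where "\<tau> = \<sigma> \<circ> transpose i (Suc n)"
      have "transpose i (Suc n) permutes {1..Suc n}" by (rule permutes_swap_id) (use iin in auto)
      then have tp: "\<tau> permutes {1..Suc n}" unfolding \<tau>_def using permutes_compose[OF _ sp] by blast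
      have "\<tau> (Suc n) = Suc n" unfolding \<tau>_def using si by simp
      then have tp': "\<tau> \<in> ?S n" using perm_fix_iff tp by blast
      have "insp \<tau> i (Suc n) = \<sigma>" unfolding insp_def \<tau>_def by (simp add: comp_assoc)
      then show "\<sigma> \<in> (\<Union>i\<in>{1..n}. ?B i)" using tp' iin' by blast
    qed
    show "(\<Union>i\<in>{1..n}. ?B i) \<subseteq> {\<sigma> \<in> ?S (Suc n). \<sigma> (Suc n) \<noteq> Suc n}"
    proof
      fix \<sigma> assume "\<sigma> \<in> (\<Union>i\<in>{1..n}. ?B i)"
      then obtain i \<tau> where i: "i \<in> {1..n}" and t: "\<tau> permutes {1..n}" and s: "\<sigma> = insp \<tau> i (Suc n)" by blast
      have "\<sigma> permutes {1..Suc n}" unfolding s by (rule s_perm[OF t i])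
      moreover have "\<sigma> (Suc n) = \<tau> i" unfolding s by (rule s_N[OF t i])
      moreover have "\<tau> i \<in> {1..n}" by (rule t_in[OF t i i])
      ultimately show "\<sigma> \<in> {\<sigma> \<in> ?S (Suc n). \<sigma> (Suc n) \<noteq> Suc n}" by auto
    qed
  qed
  have split: "?S (Suc n) = {\<sigma> \<in> ?S (Suc n). \<sigma> (Suc n) = Suc n} \<union> {\<sigma> \<in> ?S (Suc n). \<sigma> (Suc n) \<noteq> Suc n}" by blast
  have "(\<Sum>\<sigma>\<in>?S (Suc n). h \<sigma>) = (\<Sum>\<sigma>\<in>{\<sigma> \<in> ?S (Suc n). \<sigma> (Suc n) = Suc n}. h \<sigma>) + (\<Sum>\<sigma>\<in>{\<sigma> \<in> ?S (Suc n). \<sigma> (Suc n) \<noteq> Suc n}. h \<sigma>)"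
    by (subst split, rule sum.union_disjoint) (use fin in auto)
  also have "(\<Sum>\<sigma>\<in>{\<sigma> \<in> ?S (Suc n). \<sigma> (Suc n) \<noteq> Suc n}. h \<sigma>) = (\<Sum>i\<in>{1..n}. sum h (?B i))"
    unfolding B
  proof (rule sum.UNION_disjoint)
    show "finite {1..n}" by simp
    show "\<forall>i\<in>{1..n}. finite (?B i)" using fin by auto
    show "\<forall>i\<in>{1..n}. \<forall>j\<in>{1..n}. i \<noteq> j \<longrightarrow> ?B i \<inter> ?B j = {}"
    proof (intro ballI impI)
      fix i j assume ij: "i \<in> {1..n}" "j \<in> {1..n}" "i \<noteq> j"
      show "?B i \<inter> ?B j = {}"
      proof (rule ccontr)
        assume "?B i \<inter> ?B j \<noteq> {}"
        then obtain \<tau> \<tau>' where t: "\<tau> permutes {1..n}" "\<tau>' permutes {1..n}" and e: "insp \<tau> i (Suc n) = insp \<tau>' j (Suc n)"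
          by blast
        have "insp \<tau> i (Suc n) i = Suc n" by (rule s_i[OF t(1) ij(1)])
        moreover have "insp \<tau>' j (Suc n) i = \<tau>' i" by (rule s_o[OF t(2) ij(2)]) (use ij in auto)
        moreover have "\<tau>' i \<in> {1..n}" by (rule t_in[OF t(2) ij(2) ij(1)])
        ultimately show False using e by auto
      qed
    qed
  qed
  also have "(\<lambda>i. sum h (?B i)) = (\<lambda>i. \<Sum>\<tau>\<in>?S n. h (insp \<tau> i (Suc n)))"
  proof (rule ext)
    fix i
    have "inj_on (\<lambda>\<tau>. insp \<tau> i (Suc n)) (?S n)" by (rule inj_onI) (rule insp_inj)
    then show "sum h (?B i) = (\<Sum>\<tau>\<in>?S n. h (insp \<tau> i (Suc n)))" by (simp add: sum.reindex)
  qed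
  finally show ?thesis unfolding A .
qed

lemma gr_graft: "gr y (graft F S) = graft F (S @ [y])"
proof (cases "rev S")
  case Nil
  then have "S = []" by simp
  then show ?thesis by (simp add: graft_def gr_of)
next
  case (Cons t rs)
  have "graft F (S @ [y]) = star (graftR F (t # rs)) (frag_of [y])"
    by (simp add: graft_def Cons)
  also have "\<dots> = gr y (graft F S)"
    by (simp add: star_def magstar_eq_M bilin_B2 B2_of_right M_single gr_def graft_def Cons)
  finally show ?thesis by simp
qed

definition RHS :: "'x forest \<Rightarrow> 'x forest \<Rightarrow> 'x tmag" where
  "RHS F G = (\<Sum>\<sigma> \<in> {\<sigma>. \<sigma> permutes {1..length G}}.
       frag_cmul ((-1) ^ (num_orbits \<sigma> (length G) + length G)) (graft F (Psi G \<sigma>)))"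

lemma main: "M F G = RHS F G"
proof (induction G rule: length_induct)
  case (1 G)
  show ?case
  proof (cases G rule: rev_cases)
    case Nil
    have S0: "{\<sigma>. \<sigma> permutes {1..length G}} = {id}" using Nil by simp
    have a: "num_orbits id (length G) = 0" using Nil by (simp add: num_orbits_def)
    have b: "Psi G id = []" using Nil by (simp add: Psi_def orbit_minima_def)
    have c: "graft F [] = frag_of F" by (simp add: graft_def)
    show ?thesis unfolding RHS_def S0 using Nil a b c by simp
  next
    case (snoc G' y)
    define n where "n = length G'"
    define S where "S = {\<tau>. \<tau> permutes {1..n}}"
    define c where "c = (\<lambda>\<tau>. ((-1::int) ^ (num_orbits \<tau> n + n)))"
    define Gi where "Gi = (\<lambda>j. G'[j := Node (G' ! j) y])"
    have lenGi: "length (Gi j) = n" for j by (simp add: Gi_def n_def)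
    have ih: "M F H = RHS F H" if "length H = n" for H
      using "1.IH"[rule_format, of H] that snoc n_def by simp
    have rhsn: "RHS F H = (\<Sum>\<tau>\<in>S. frag_cmul (c \<tau>) (graft F (Psi H \<tau>)))" if "length H = n" for H
      unfolding RHS_def S_def c_def that ..
    have "M F G = gr y (M F G') - frag_extend (M F) (graft1 G' y)" unfolding snoc M_snoc ..
    also have "gr y (M F G') = (\<Sum>\<tau>\<in>S. frag_cmul (c \<tau>) (graft F (Psi G' \<tau> @ [y])))"
      unfolding ih[OF n_def[symmetric]] rhsn[OF n_def[symmetric]] gr_sum gr_cmul gr_graft ..
    also have "frag_extend (M F) (graft1 G' y) = (\<Sum>j<n. RHS F (Gi j))"
      unfolding graft1_def frag_extend_sum[OF finite_lessThan] o_def frag_extend_of n_def[symmetric] Gi_def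
      by (rule sum.cong[OF refl]) (rule ih, simp add: n_def)
    also have "\<dots> = (\<Sum>i\<in>{1..n}. RHS F (Gi (i - 1)))"
    proof -
      have "(\<Sum>i\<in>{Suc 0..n}. RHS F (Gi (i - 1))) = (\<Sum>k<n. RHS F (Gi (Suc k - 1)))"
        by (rule sum.atLeast1_atMost_eq)
      then show ?thesis by simp
    qed
    finally have lhs: "M F G = (\<Sum>\<tau>\<in>S. frag_cmul (c \<tau>) (graft F (Psi G' \<tau> @ [y]))) - (\<Sum>i\<in>{1..n}. \<Sum>\<tau>\<in>S. frag_cmul (c \<tau>) (graft F (Psi (Gi (i - 1)) \<tau>)))"
      using rhsn[OF lenGi] by simp
    have "RHS F G = (\<Sum>\<sigma>\<in>{\<sigma>. \<sigma> permutes {1..Suc n}}. frag_cmul ((-1) ^ (num_orbits \<sigma> (Suc n) + Suc n)) (graft F (Psi (G' @ [y]) \<sigma>)))"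
      unfolding RHS_def snoc n_def by simp
    also have "\<dots> = (\<Sum>\<tau>\<in>S. frag_cmul ((-1) ^ (num_orbits \<tau> (Suc n) + Suc n)) (graft F (Psi (G' @ [y]) \<tau>)))
       + (\<Sum>i\<in>{1..n}. \<Sum>\<tau>\<in>S. frag_cmul ((-1) ^ (num_orbits (insp \<tau> i (Suc n)) (Suc n) + Suc n)) (graft F (Psi (G' @ [y]) (insp \<tau> i (Suc n)))))"
      unfolding S_def by (rule perm_decomp)
    also have "(\<Sum>\<tau>\<in>S. frag_cmul ((-1) ^ (num_orbits \<tau> (Suc n) + Suc n)) (graft F (Psi (G' @ [y]) \<tau>)))
        = (\<Sum>\<tau>\<in>S. frag_cmul (c \<tau>) (graft F (Psi G' \<tau> @ [y])))"
    proof (rule sum.cong[OF refl])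
      fix \<tau> assume "\<tau> \<in> S"
      then have t: "\<tau> permutes {1..n}" by (simp add: S_def)
      show "frag_cmul ((-1) ^ (num_orbits \<tau> (Suc n) + Suc n)) (graft F (Psi (G' @ [y]) \<tau>)) = frag_cmul (c \<tau>) (graft F (Psi G' \<tau> @ [y]))"
        using case_A[OF t n_def[symmetric]] by (simp add: c_def)
    qed
    also have "(\<Sum>i\<in>{1..n}. \<Sum>\<tau>\<in>S. frag_cmul ((-1) ^ (num_orbits (insp \<tau> i (Suc n)) (Suc n) + Suc n)) (graft F (Psi (G' @ [y]) (insp \<tau> i (Suc n)))))
        = - (\<Sum>i\<in>{1..n}. \<Sum>\<tau>\<in>S. frag_cmul (c \<tau>) (graft F (Psi (Gi (i - 1)) \<tau>)))"
      unfolding sum_negf[symmetric]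
    proof (rule sum.cong[OF refl], rule sum.cong[OF refl])
      fix i \<tau> assume i: "i \<in> {1..n}" and "\<tau> \<in> S"
      then have t: "\<tau> permutes {1..n}" by (simp add: S_def)
      show "frag_cmul ((-1) ^ (num_orbits (insp \<tau> i (Suc n)) (Suc n) + Suc n)) (graft F (Psi (G' @ [y]) (insp \<tau> i (Suc n))))
          = - frag_cmul (c \<tau>) (graft F (Psi (Gi (i - 1)) \<tau>))"
        using case_B[OF t i n_def[symmetric]] by (simp add: c_def Gi_def)
    qed
    finally show ?thesis using lhs by simp
  qed
qed

theorem corollary4p4:
  fixes F F' :: "'x forest"
  assumes "length F' \<ge> 1"
  shows "magstar F F' =
    (\<Sum>\<sigma> \<in> {\<sigma>. \<sigma> permutes {1..length F'}}.
       frag_cmul ((-1) ^ (num_orbits \<sigma> (length F') + length F')) (graft F (Psi F' \<sigma>)))"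
  using main[of F F'] unfolding magstar_eq_M RHS_def .


end
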